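(* For every $\mu\in[\mu_m,\mu_M]$, $$\lim_{x\to\infty}\frac{V^N(x,N,\mu)}{x}=\max\{\hat f(N,\mu),\beta_N(\mu)\}.$$
   Context: Let $(B_t)_{t\ge0}$ be a standard Brownian motion, $\mathbb F^B$ its augmented filtration and $\mathcal T(\mathbb F^B)$ the set of $\mathbb F^B$-stopping times with values in $[0,\infty]$ (terms discounted at $\tau$ are $0$ on $\{\tau=\infty\}$). Fix $\theta>0$, $\alpha\ge0$, $\sigma>0$, $\rho>0$, $\nu\in[0,1]$, $K\in\mathbb R$, $\hat\rho>0$, $0<\mu_m\le\mu_M<\infty$, $\hat\mu\in[\mu_m,\mu_M]$, and assume $\theta-\alpha-\rho-\mu_m<0$. For $x>0$, $X_t=x\exp((\theta-\alpha-\sigma^2/2)t+\sigma B_t)$ solves $dX_t=(\theta-\alpha)X_tdt+\sigma X_tdB_t$, $X_0=x$, and $\mathsf E_x$ is the corresponding expectation. For $\mu\in[\mu_m,\mu_M]$ let $\hat f(N,\mu):=(\hat\rho+\hat\mu)/(\rho+\mu)$, $\beta_N(\mu):=(\alpha+\nu\mu)/(\rho+\mu+\alpha-\theta)$, and $$V^N(x,N,\mu):=\sup_{\tau\in\mathcal T(\mathbb F^B)}\mathsf E_x\Big[\int_0^\tau e^{-(\rho+\mu)t}(\alpha+\nu\mu)X_tdt+e^{-(\rho+\mu)\tau}\hat f(N,\mu)(X_\tau-K)\Big].$$ *)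

theory Defs
  imports "HOL-Probability.Probability"
begin

definition std_BM :: "'a measure \<Rightarrow> (real \<Rightarrow> 'a \<Rightarrow> real) \<Rightarrow> bool" where
  "std_BM M B \<longleftrightarrow> prob_space M
     \<and> (\<forall>t\<ge>0. B t \<in> borel_measurable M)
     \<and> (\<forall>\<omega>\<in>space M. B 0 \<omega> = 0 \<and> continuous_on {0..} (\<lambda>t. B t \<omega>))
     \<and> (\<forall>s t. 0 \<le> s \<and> s < t \<longrightarrow>
           distributed M lborel (\<lambda>\<omega>. B t \<omega> - B s \<omega>) (normal_density 0 (sqrt (t - s))))
     \<and> (\<forall>(n::nat) (u::nat \<Rightarrow> real). 0 \<le> u 0 \<and> (\<forall>i<n. u i < u (Suc i)) \<longrightarrow>
           prob_space.indep_vars M (\<lambda>_. borel) (\<lambda>i \<omega>. B (u (Suc i)) \<omega> - B (u i) \<omega>) {..<n})"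

definition nat_filt_sets :: "'a measure \<Rightarrow> (real \<Rightarrow> 'a \<Rightarrow> real) \<Rightarrow> ennreal \<Rightarrow> 'a set set" where
  "nat_filt_sets M B t = sigma_sets (space M)
     (\<Union>s\<in>{s. 0 \<le> s \<and> ennreal s \<le> t}. {B s -` A \<inter> space M | A. A \<in> sets borel})"

definition aug_filt :: "'a measure \<Rightarrow> (real \<Rightarrow> 'a \<Rightarrow> real) \<Rightarrow> ennreal \<Rightarrow> 'a measure" where
  "aug_filt M B t = sigma (space M) (nat_filt_sets M B t \<union> null_sets (completion M))"

definition GBM :: "real \<Rightarrow> real \<Rightarrow> real \<Rightarrow> real \<Rightarrow> (real \<Rightarrow> 'a \<Rightarrow> real) \<Rightarrow> real \<Rightarrow> 'a \<Rightarrow> real" where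
  "GBM x \<theta> \<alpha> \<sigma> B t \<omega> = x * exp ((\<theta> - \<alpha> - \<sigma>\<^sup>2 / 2) * t + \<sigma> * B t \<omega>)"

definition reward ::
  "'a measure \<Rightarrow> (real \<Rightarrow> 'a \<Rightarrow> real) \<Rightarrow> real \<Rightarrow> real \<Rightarrow> real \<Rightarrow> real \<Rightarrow> real \<Rightarrow> real \<Rightarrow> real
    \<Rightarrow> real \<Rightarrow> real \<Rightarrow> ('a \<Rightarrow> ennreal) \<Rightarrow> real" where
  "reward M B x \<theta> \<alpha> \<sigma> \<rho> \<nu> K fh \<mu> \<tau> =
     (\<integral>\<omega>. (LINT t:{t. 0 \<le> t \<and> ennreal t \<le> \<tau> \<omega>}|lborel.
                 exp (- (\<rho> + \<mu>) * t) * (\<alpha> + \<nu> * \<mu>) * GBM x \<theta> \<alpha> \<sigma> B t \<omega>)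
           + (if \<tau> \<omega> = \<infinity> then 0
              else exp (- (\<rho> + \<mu>) * enn2real (\<tau> \<omega>)) * fh * (GBM x \<theta> \<alpha> \<sigma> B (enn2real (\<tau> \<omega>)) \<omega> - K))
      \<partial>completion M)"

text \<open>Value function V^N(x,N,\<mu>); the regime label N only enters through fh = f^(N,\<mu>).\<close>
definition VN ::
  "'a measure \<Rightarrow> (real \<Rightarrow> 'a \<Rightarrow> real) \<Rightarrow> real \<Rightarrow> real \<Rightarrow> real \<Rightarrow> real \<Rightarrow> real \<Rightarrow> real \<Rightarrow> real
    \<Rightarrow> real \<Rightarrow> real \<Rightarrow> real" where
  "VN M B x \<theta> \<alpha> \<sigma> \<rho> \<nu> K fh \<mu> =
     (SUP \<tau>\<in>{\<tau>. stopping_time (aug_filt M B) \<tau>}. reward M B x \<theta> \<alpha> \<sigma> \<rho> \<nu> K fh \<mu> \<tau>)"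

end

theory Submission
  imports Defs
begin
lemma normal_mgf:
  assumes v: "0 < v"
  shows "(\<integral>\<^sup>+x. ennreal (normal_density 0 v x) * ennreal (exp (c * x)) \<partial>lborel)
           = ennreal (exp (c^2 * v^2 / 2))"
proof -
  have eq: "normal_density 0 v x * exp (c * x) = exp (c^2 * v^2 / 2) * normal_density (c * v^2) v x" for x
  proof -
    have "- (x - 0)\<^sup>2 / (2 * v\<^sup>2) + c * x = c^2 * v^2 / 2 + (- (x - c * v^2)\<^sup>2 / (2 * v\<^sup>2))"
      using v by (simp add: field_simps power2_eq_square)
    then show ?thesis
      unfolding normal_density_def by (simp add: exp_add[symmetric] mult_ac)
  qed
  have "(\<integral>\<^sup>+x. ennreal (normal_density 0 v x) * ennreal (exp (c * x)) \<partial>lborel)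
      = (\<integral>\<^sup>+x. ennreal (exp (c^2 * v^2 / 2)) * ennreal (normal_density (c * v^2) v x) \<partial>lborel)"
    by (intro nn_integral_cong) (simp add: eq[symmetric] ennreal_mult[symmetric])
  also have "\<dots> = ennreal (exp (c^2 * v^2 / 2)) * (\<integral>\<^sup>+x. ennreal (normal_density (c * v^2) v x) \<partial>lborel)"
    by (rule nn_integral_cmult) simp
  also have "(\<integral>\<^sup>+x. ennreal (normal_density (c * v^2) v x) \<partial>lborel) = 1"
    using v by (subst nn_integral_eq_integral) (auto simp: integral_normal_density)
  finally show ?thesis by simp
qed

locale bm = prob_space M for M :: "'a measure" +
  fixes B :: "real \<Rightarrow> 'a \<Rightarrow> real"
  assumes BM: "std_BM M B"
begin

abbreviation "P \<equiv> completion M"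

lemma prob_M: "prob_space M" using BM by (simp add: std_BM_def)
lemma prob_P: "prob_space P" by (rule prob_space.prob_space_completion[OF prob_M])
lemma B_meas: "0 \<le> t \<Longrightarrow> B t \<in> borel_measurable M" using BM by (simp add: std_BM_def)
lemma B_measP: "0 \<le> t \<Longrightarrow> B t \<in> borel_measurable P" using B_meas by (rule measurable_completion)
lemma B0: "\<omega> \<in> space M \<Longrightarrow> B 0 \<omega> = 0" using BM by (simp add: std_BM_def)
lemma B_cont: "\<omega> \<in> space M \<Longrightarrow> continuous_on {0..} (\<lambda>t. B t \<omega>)" using BM by (simp add: std_BM_def)
lemma B_distr: "0 \<le> s \<Longrightarrow> s < t \<Longrightarrow>
   distributed M lborel (\<lambda>\<omega>. B t \<omega> - B s \<omega>) (\<lambda>x. ennreal (normal_density 0 (sqrt (t - s)) x))"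
  using BM by (simp add: std_BM_def)
lemma B_indep: "0 \<le> u 0 \<Longrightarrow> (\<forall>i<n. u i < u (Suc i)) \<Longrightarrow>
   prob_space.indep_vars M (\<lambda>_. borel) (\<lambda>i \<omega>. B (u (Suc i)) \<omega> - B (u i) \<omega>) {..<n}"
  using BM by (simp add: std_BM_def)

lemma mgf_incr:
  assumes "0 \<le> t" "t < s"
  shows "(\<integral>\<^sup>+\<omega>. ennreal (exp (c * (B s \<omega> - B t \<omega>))) \<partial>M) = ennreal (exp (c^2 * (s - t) / 2))"
proof -
  have "(\<integral>\<^sup>+\<omega>. ennreal (exp (c * (B s \<omega> - B t \<omega>))) \<partial>M)
     = (\<integral>\<^sup>+x. ennreal (normal_density 0 (sqrt (s - t)) x) * ennreal (exp (c * x)) \<partial>lborel)"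
    by (rule distributed_nn_integral[OF B_distr[OF assms], symmetric]) simp
  also have "\<dots> = ennreal (exp (c^2 * (sqrt (s - t))^2 / 2))"
    using assms by (intro normal_mgf) simp
  finally show ?thesis using assms by simp
qed

lemma B_joint: "(\<lambda>(\<omega>,t). B (max 0 t) \<omega>) \<in> borel_measurable (P \<Otimes>\<^sub>M lborel)"
proof (rule borel_measurable_LIMSEQ_real)
  define f where "f n = (\<lambda>(\<omega>::'a,t::real). B (max 0 (real_of_int \<lfloor>real (Suc n) * max 0 t\<rfloor> / real (Suc n))) \<omega>)" for n
  show "f n \<in> borel_measurable (P \<Otimes>\<^sub>M lborel)" for n
  proof -
    have "(\<lambda>p. (\<lambda>k::int. \<lambda>p. B (max 0 (real_of_int k / real (Suc n))) (fst p)) (\<lfloor>real (Suc n) * max 0 (snd p)\<rfloor>) p)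
       \<in> borel_measurable (P \<Otimes>\<^sub>M lborel)"
    proof (rule measurable_compose_countable[where f="\<lambda>k p. B (max 0 (real_of_int k / real (Suc n))) (fst p)"])
      fix k :: int
      have "B (max 0 (real_of_int k / real (Suc n))) \<in> borel_measurable P" by (rule B_measP) simp
      then show "(\<lambda>p. B (max 0 (real_of_int k / real (Suc n))) (fst p)) \<in> borel_measurable (P \<Otimes>\<^sub>M lborel)"
        by (rule measurable_compose[OF measurable_fst])
    next
      show "(\<lambda>p. \<lfloor>real (Suc n) * max 0 (snd p)\<rfloor>) \<in> (P \<Otimes>\<^sub>M lborel) \<rightarrow>\<^sub>M count_space UNIV"
        by (rule measurable_compose[OF _ measurable_real_floor]) simp
    qed
    then show ?thesis by (simp add: f_def case_prod_beta)
  qed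
  fix p :: "'a \<times> real" assume p: "p \<in> space (P \<Otimes>\<^sub>M lborel)"
  obtain \<omega> t where pe: "p = (\<omega>, t)" by (cases p)
  with p have \<omega>: "\<omega> \<in> space M" by (simp add: space_pair_measure)
  define s where "s = max 0 t"
  have s0: "0 \<le> s" by (simp add: s_def)
  define g where "g n = real_of_int \<lfloor>real (Suc n) * s\<rfloor> / real (Suc n)" for n
  have g0: "0 \<le> g n" for n using s0 by (simp add: g_def)
  have glim: "g \<longlonglongrightarrow> s"
  proof (rule real_tendsto_sandwich[where f="\<lambda>n. s - 1 / real (Suc n)" and h="\<lambda>n. s"])
    show "\<forall>\<^sub>F n in sequentially. s - 1 / real (Suc n) \<le> g n"
    proof (intro always_eventually allI)
      fix n
      have "real (Suc n) * s - 1 \<le> real_of_int \<lfloor>real (Suc n) * s\<rfloor>" by linarith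
      have "s - 1 / real (Suc n) = (real (Suc n) * s - 1) / real (Suc n)" by (simp add: field_simps)
      also have "\<dots> \<le> g n" unfolding g_def by (rule divide_right_mono) (use \<open>real (Suc n) * s - 1 \<le> _\<close> in auto)
      finally show "s - 1 / real (Suc n) \<le> g n" .
    qed
    show "\<forall>\<^sub>F n in sequentially. g n \<le> s"
    proof (intro always_eventually allI)
      fix n
      have "real_of_int \<lfloor>real (Suc n) * s\<rfloor> \<le> real (Suc n) * s" by linarith
      then show "g n \<le> s" by (simp add: g_def field_simps)
    qed
    show "(\<lambda>n. s - 1 / real (Suc n)) \<longlonglongrightarrow> s"
      using tendsto_diff[OF tendsto_const[of s] LIMSEQ_inverse_real_of_nat] by (simp add: inverse_eq_divide)
  qed simp
  have "(\<lambda>n. B (g n) \<omega>) \<longlonglongrightarrow> B s \<omega>"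
    by (rule continuous_on_tendsto_compose[OF B_cont[OF \<omega>] glim]) (auto simp: s0 g0)
  then show "(\<lambda>n. f n p) \<longlonglongrightarrow> (\<lambda>(\<omega>,t). B (max 0 t) \<omega>) p"
    using g0 by (simp add: pe f_def g_def s_def)
qed

end

context bm begin

lemma G1_indep:
  fixes m :: nat and r :: "nat \<Rightarrow> real"
  assumes t: "0 \<le> t" "t < s" and r: "\<forall>i<m. 0 \<le> r i \<and> r i \<le> t"
    and C: "\<forall>i<m. C i \<in> sets borel" and D: "D \<in> sets borel"
  shows "prob ({\<omega>\<in>space M. \<forall>i<m. B (r i) \<omega> \<in> C i} \<inter> ((\<lambda>\<omega>. B s \<omega> - B t \<omega>) -` D \<inter> space M))
       = prob {\<omega>\<in>space M. \<forall>i<m. B (r i) \<omega> \<in> C i} * prob ((\<lambda>\<omega>. B s \<omega> - B t \<omega>) -` D \<inter> space M)"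
proof -
  define T where "T = insert 0 (insert t (r ` {..<m}))"
  have finT: "finite T" by (simp add: T_def)
  obtain L where L: "sorted_wrt (<) L" "set L = T"
    using finite_set_strict_sorted[OF finT] by blast
  define n where "n = length L"
  have T01: "\<forall>x\<in>T. 0 \<le> x \<and> x \<le> t" using r t by (auto simp: T_def)
  have inL: "x \<in> T \<Longrightarrow> \<exists>k<n. L!k = x" for x
    using L(2) by (auto simp: n_def in_set_conv_nth)
  have Lin: "k < n \<Longrightarrow> L!k \<in> T" for k using L(2) by (auto simp: n_def)
  have Lless: "i < k \<Longrightarrow> k < n \<Longrightarrow> L!i < L!k" for i k
    using sorted_wrt_nth_less[OF L(1)] by (simp add: n_def)
  obtain k0 where k0: "k0 < n" "L!k0 = 0" using inL[of 0] by (auto simp: T_def)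
  have n_pos: "0 < n" using k0 by simp
  have L0: "L!0 = 0"
  proof (cases "k0 = 0")
    case False
    then have "L!0 < L!k0" using Lless[of 0 k0] k0 by simp
    moreover have "0 \<le> L!0" using Lin[of 0] n_pos T01 by auto
    ultimately show ?thesis using k0 by simp
  qed (use k0 in simp)
  obtain k1 where k1: "k1 < n" "L!k1 = t" using inL[of t] by (auto simp: T_def)
  have Llast: "L!(n-1) = t"
  proof (cases "k1 = n - 1")
    case False
    then have "L!k1 < L!(n-1)" using Lless[of k1 "n-1"] k1 by simp
    moreover have "L!(n-1) \<le> t" using Lin[of "n-1"] n_pos T01 by auto
    ultimately show ?thesis using k1 by simp
  qed (use k1 in simp)
  define u where "u j = (if j < n then L!j else s)" for j
  have u_inc: "\<forall>i<n. u i < u (Suc i)"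
  proof (intro allI impI)
    fix i assume i: "i < n"
    show "u i < u (Suc i)"
    proof (cases "Suc i < n")
      case True then show ?thesis using Lless i by (simp add: u_def)
    next
      case False then have "i = n - 1" using i by simp
      then show ?thesis using i False Llast t by (simp add: u_def)
    qed
  qed
  have u0: "0 \<le> u 0" using n_pos L0 by (simp add: u_def)
  define X where "X i \<omega> = B (u (Suc i)) \<omega> - B (u i) \<omega>" for i \<omega>
  have ind: "indep_vars (\<lambda>_. borel) X {..<n}" using B_indep[OF u0 u_inc] by (simp add: X_def[abs_def])
  have Bsum: "B (L!j) \<omega> = (\<Sum>k<j. X k \<omega>)" if \<omega>: "\<omega> \<in> space M" and "j < n" for \<omega> j
    using \<open>j < n\<close>
  proof (induction j)
    case 0 then show ?case using L0 B0[OF \<omega>] by simp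
  next
    case (Suc j)
    then have "B (L!j) \<omega> = (\<Sum>k<j. X k \<omega>)" by simp
    then show ?case using Suc.prems by (simp add: X_def u_def)
  qed
  have Xlast: "X (n-1) \<omega> = B s \<omega> - B t \<omega>" for \<omega>
    using n_pos Llast by (simp add: X_def u_def)
  define j where "j i = (SOME k. k < n \<and> L!k = r i)" for i
  have j: "j i < n \<and> L!(j i) = r i" if "i < m" for i
  proof -
    have "\<exists>k. k < n \<and> L!k = r i" using inL[of "r i"] that by (auto simp: T_def)
    then show ?thesis unfolding j_def by (rule someI_ex)
  qed
  define I1 where "I1 = {..<n-1}"
  define I2 where "I2 = {n-1}"
  have iv: "indep_var (PiM I1 (\<lambda>_. borel)) (\<lambda>\<omega>. restrict (\<lambda>i. X i \<omega>) I1)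
                      (PiM I2 (\<lambda>_. borel)) (\<lambda>\<omega>. restrict (\<lambda>i. X i \<omega>) I2)"
    by (rule indep_var_restrict[OF ind]) (use n_pos in \<open>auto simp: I1_def I2_def\<close>)
  define Xa where "Xa = {f \<in> space (PiM I1 (\<lambda>_. borel::real measure)). \<forall>i\<in>{..<m}. (\<Sum>k<j i. f k) \<in> C i}"
  define Xb where "Xb = {f \<in> space (PiM I2 (\<lambda>_. borel::real measure)). f (n-1) \<in> D}"
  have "Measurable.pred (PiM I1 (\<lambda>_. borel::real measure)) (\<lambda>f. \<forall>i\<in>{..<m}. (\<Sum>k<j i. f k) \<in> C i)"
  proof (rule pred_intros_finite(3))
    fix i assume i: "i \<in> {..<m}"
    show "Measurable.pred (PiM I1 (\<lambda>_. borel::real measure)) (\<lambda>f. (\<Sum>k<j i. f k) \<in> C i)"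
    proof (rule pred_sets2)
      show "C i \<in> sets borel" using C i by auto
      show "(\<lambda>f. \<Sum>k<j i. f k) \<in> borel_measurable (PiM I1 (\<lambda>_. borel::real measure))"
      proof (rule borel_measurable_sum)
        fix k assume "k \<in> {..<j i}"
        then have "k \<in> I1" using j[of i] i by (auto simp: I1_def)
        then show "(\<lambda>f. f k) \<in> borel_measurable (PiM I1 (\<lambda>_. borel::real measure))"
          by (rule measurable_component_singleton)
      qed
    qed
  qed simp
  then have Xa_sets: "Xa \<in> sets (PiM I1 (\<lambda>_. borel))" by (simp add: pred_def Xa_def)
  have "Measurable.pred (PiM I2 (\<lambda>_. borel::real measure)) (\<lambda>f. f (n-1) \<in> D)"
    by (rule pred_sets2[OF D]) (rule measurable_component_singleton, simp add: I2_def)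
  then have Xb_sets: "Xb \<in> sets (PiM I2 (\<lambda>_. borel))" by (simp add: pred_def Xb_def)
  have pre1: "(\<lambda>\<omega>. restrict (\<lambda>i. X i \<omega>) I1) -` Xa \<inter> space M = {\<omega>\<in>space M. \<forall>i<m. B (r i) \<omega> \<in> C i}"
  proof -
    have "(\<Sum>k<j i. restrict (\<lambda>i. X i \<omega>) I1 k) = B (r i) \<omega>" if "\<omega> \<in> space M" "i < m" for \<omega> i
    proof -
      have "(\<Sum>k<j i. restrict (\<lambda>i. X i \<omega>) I1 k) = (\<Sum>k<j i. X k \<omega>)"
        using j[OF \<open>i < m\<close>] by (intro sum.cong) (auto simp: I1_def)
      also have "\<dots> = B (L!(j i)) \<omega>" using Bsum[OF \<open>\<omega> \<in> space M\<close>, of "j i"] j[OF \<open>i<m\<close>] by simp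
      finally show ?thesis using j[OF \<open>i<m\<close>] by simp
    qed
    then show ?thesis by (auto simp: Xa_def space_PiM)
  qed
  have pre2: "(\<lambda>\<omega>. restrict (\<lambda>i. X i \<omega>) I2) -` Xb \<inter> space M = (\<lambda>\<omega>. B s \<omega> - B t \<omega>) -` D \<inter> space M"
    using Xlast by (auto simp: Xb_def space_PiM I2_def)
  have pre12: "(\<lambda>\<omega>. (restrict (\<lambda>i. X i \<omega>) I1, restrict (\<lambda>i. X i \<omega>) I2)) -` (Xa \<times> Xb) \<inter> space M
     = {\<omega>\<in>space M. \<forall>i<m. B (r i) \<omega> \<in> C i} \<inter> ((\<lambda>\<omega>. B s \<omega> - B t \<omega>) -` D \<inter> space M)"
    using pre1 pre2 by blast
  show ?thesis
    using indep_varD[OF iv Xa_sets Xb_sets] unfolding pre12 pre1 pre2 .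
qed

end

context bm begin

lemma nat_filt_gen_sub: "(\<Union>s\<in>{s. 0 \<le> s \<and> ennreal s \<le> T}. {B s -` A \<inter> space M | A. A \<in> sets borel}) \<subseteq> sets M"
  using B_meas by (auto intro: measurable_sets)

lemma nat_filt_sub: "nat_filt_sets M B T \<subseteq> sets M"
  unfolding nat_filt_sets_def by (rule sets.sigma_sets_subset[OF nat_filt_gen_sub])

lemma nat_filt_pow: "nat_filt_sets M B T \<subseteq> Pow (space M)"
  using nat_filt_sub sets.sets_into_space by blast

lemma nat_filt_sigma: "sigma_sets (space M) (nat_filt_sets M B T) = nat_filt_sets M B T"
  unfolding nat_filt_sets_def
  by (rule sigma_sets_sigma_sets_eq) (use nat_filt_gen_sub sets.sets_into_space in blast)

lemma aug_sets: "sets (aug_filt M B T) = sigma_sets (space M) (nat_filt_sets M B T \<union> null_sets P)"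
proof -
  have "nat_filt_sets M B T \<union> null_sets P \<subseteq> Pow (space M)"
    using nat_filt_pow null_sets.sets_into_space[of _ P] by auto
  then show ?thesis unfolding aug_filt_def by (simp add: sets_measure_of)
qed

lemma aug_space: "space (aug_filt M B T) = space M"
  unfolding aug_filt_def by (simp add: space_measure_of_conv)

lemma aug_sub: "sets (aug_filt M B T) \<subseteq> sets P"
proof -
  have "nat_filt_sets M B T \<union> null_sets P \<subseteq> sets P"
    using nat_filt_sub by auto
  from sets.sigma_sets_subset[OF this] show ?thesis unfolding aug_sets by simp
qed

lemma aug_approx:
  assumes "A \<in> sets (aug_filt M B T)"
  shows "\<exists>S\<in>nat_filt_sets M B T. \<exists>N\<in>null_sets P. (A - S) \<union> (S - A) \<subseteq> N"
  using assms unfolding aug_sets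
proof (induction rule: sigma_sets.induct)
  case (Basic a)
  then show ?case
  proof
    assume "a \<in> nat_filt_sets M B T" then show ?thesis by (intro bexI[of _ a] bexI[of _ "{}"]) auto
  next
    assume "a \<in> null_sets P"
    moreover have "{} \<in> nat_filt_sets M B T" unfolding nat_filt_sets_def by (rule sigma_sets.Empty)
    ultimately show ?thesis by (intro bexI[of _ "{}"] bexI[of _ a]) auto
  qed
next
  case Empty
  have "{} \<in> nat_filt_sets M B T" unfolding nat_filt_sets_def by (rule sigma_sets.Empty)
  then show ?case by (intro bexI[of _ "{}"] bexI[of _ "{}"]) auto
next
  case (Compl a)
  then obtain S N where S: "S \<in> nat_filt_sets M B T" "N \<in> null_sets P" "(a - S) \<union> (S - a) \<subseteq> N" by blast
  have "space M - S \<in> nat_filt_sets M B T" using S(1) unfolding nat_filt_sets_def by (rule sigma_sets.Compl)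
  then show ?case using S by (intro bexI[of _ "space M - S"] bexI[of _ N]) auto
next
  case (Union a)
  then have "\<forall>i. \<exists>S N. S \<in> nat_filt_sets M B T \<and> N \<in> null_sets P \<and> (a i - S) \<union> (S - a i) \<subseteq> N" by blast
  then obtain S N where S: "\<And>i. S i \<in> nat_filt_sets M B T" "\<And>i. N i \<in> null_sets P" "\<And>i. (a i - S i) \<union> (S i - a i) \<subseteq> N i"
    by metis
  have "(\<Union>i. S i) \<in> nat_filt_sets M B T" using S(1) unfolding nat_filt_sets_def by (rule sigma_sets.Union)
  moreover have "(\<Union>i. N i) \<in> null_sets P" using S(2) by (rule null_sets_UN)
  moreover have "((\<Union>i. a i) - (\<Union>i. S i)) \<union> ((\<Union>i. S i) - (\<Union>i. a i)) \<subseteq> (\<Union>i. N i)"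
    using S(3) by blast
  ultimately show ?case by blast
qed

lemma indep_core:
  assumes t: "0 \<le> t" "t < s"
  shows "indep_set (nat_filt_sets M B (ennreal t))
           (sigma_sets (space M) {(\<lambda>\<omega>. B s \<omega> - B t \<omega>) -` A \<inter> space M | A. A \<in> sets borel})"
proof -
  define G1 where "G1 = {{\<omega>\<in>space M. \<forall>i<m. B (r i) \<omega> \<in> C i} | (m::nat) (r::nat\<Rightarrow>real) (C::nat \<Rightarrow> real set).
      (\<forall>i<m. 0 \<le> r i \<and> r i \<le> t) \<and> (\<forall>i<m. C i \<in> sets borel)}"
  define G2 where "G2 = {(\<lambda>\<omega>. B s \<omega> - B t \<omega>) -` A \<inter> space M | A. A \<in> sets borel}"
  have "B s \<in> borel_measurable M" "B t \<in> borel_measurable M" using B_meas t by simp_all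
  then have Dm: "(\<lambda>\<omega>. B s \<omega> - B t \<omega>) \<in> borel_measurable M" by (rule borel_measurable_diff)
  have G1ev: "G1 \<subseteq> events"
  proof
    fix a assume "a \<in> G1"
    then have "\<exists>(m::nat) (r::nat\<Rightarrow>real) (C::nat\<Rightarrow>real set). a = {\<omega>\<in>space M. \<forall>i<m. B (r i) \<omega> \<in> C i} \<and> (\<forall>i<m. 0 \<le> r i \<and> r i \<le> t) \<and> (\<forall>i<m. C i \<in> sets borel)"
      unfolding G1_def by (simp only: mem_Collect_eq)
    then obtain m :: nat and r :: "nat \<Rightarrow> real" and C :: "nat \<Rightarrow> real set" where a: "a = {\<omega>\<in>space M. \<forall>i<m. B (r i) \<omega> \<in> C i}"
      and rC: "\<forall>i<m. 0 \<le> r i \<and> r i \<le> t" "\<forall>i<m. C i \<in> sets borel" by blast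
    have "{\<omega>\<in>space M. \<forall>i\<in>{..<m}. B (r i) \<omega> \<in> C i} \<in> sets M"
    proof (rule sets.sets_Collect_finite_All)
      fix i assume i: "i \<in> {..<m}"
      have "C i \<in> sets borel" using rC i by simp
      moreover have "B (r i) \<in> borel_measurable M" by (rule B_meas) (use rC i in simp)
      ultimately have "B (r i) -` C i \<inter> space M \<in> sets M" by (intro measurable_sets) 
      moreover have "{\<omega>\<in>space M. B (r i) \<omega> \<in> C i} = B (r i) -` C i \<inter> space M" by blast
      ultimately show "{\<omega>\<in>space M. B (r i) \<omega> \<in> C i} \<in> sets M" by simp
    qed simp
    moreover have "a = {\<omega>\<in>space M. \<forall>i\<in>{..<m}. B (r i) \<omega> \<in> C i}" unfolding a using [[show_types, show_sorts]] by auto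
    ultimately show "a \<in> events" by simp
  qed
  have G2ev: "G2 \<subseteq> events" unfolding G2_def using Dm by (auto intro: measurable_sets)
  have G1E: "\<exists>(m::nat) (r::nat\<Rightarrow>real) (C::nat\<Rightarrow>real set). a = {\<omega>\<in>space M. \<forall>i<m. B (r i) \<omega> \<in> C i} \<and> (\<forall>i<m. 0 \<le> r i \<and> r i \<le> t) \<and> (\<forall>i<m. C i \<in> sets borel)"
    if "a \<in> G1" for a using that unfolding G1_def by (simp only: mem_Collect_eq)
  have G2E: "\<exists>A. a = (\<lambda>\<omega>. B s \<omega> - B t \<omega>) -` A \<inter> space M \<and> A \<in> sets borel"
    if "a \<in> G2" for a using that unfolding G2_def by (simp only: mem_Collect_eq)
  have "indep_set G1 G2"
    unfolding indep_sets2_eq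
  proof (intro conjI G1ev G2ev ballI)
    fix a b assume ab: "a \<in> G1" "b \<in> G2"
    obtain m :: nat and r :: "nat \<Rightarrow> real" and C :: "nat \<Rightarrow> real set" and D :: "real set" where a: "a = {\<omega>\<in>space M. \<forall>i<m. B (r i) \<omega> \<in> C i}"
      and rC: "\<forall>i<m. 0 \<le> r i \<and> r i \<le> t" "\<forall>i<m. C i \<in> sets borel"
      and b: "b = (\<lambda>\<omega>. B s \<omega> - B t \<omega>) -` D \<inter> space M" "D \<in> sets borel"
      using G1E[OF ab(1)] G2E[OF ab(2)] by blast
    show "prob (a \<inter> b) = prob a * prob b" unfolding a b(1)
      by (rule G1_indep[OF t rC b(2)])
  qed
  moreover have "Int_stable G1"
  proof (rule Int_stableI)
    fix a b assume ab: "a \<in> G1" "b \<in> G1"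
    obtain m1 m2 :: nat and r1 r2 :: "nat \<Rightarrow> real" and C1 C2 :: "nat \<Rightarrow> real set" where a: "a = {\<omega>\<in>space M. \<forall>i<m1. B (r1 i) \<omega> \<in> C1 i}"
      and rC1: "\<forall>i<m1. 0 \<le> r1 i \<and> r1 i \<le> t" "\<forall>i<m1. C1 i \<in> sets borel"
      and b: "b = {\<omega>\<in>space M. \<forall>i<m2. B (r2 i) \<omega> \<in> C2 i}"
      and rC2: "\<forall>i<m2. 0 \<le> r2 i \<and> r2 i \<le> t" "\<forall>i<m2. C2 i \<in> sets borel"
      using G1E[OF ab(1)] G1E[OF ab(2)] by blast
    define r where "r i = (if i < m1 then r1 i else r2 (i - m1))" for i
    define C where "C i = (if i < m1 then C1 i else C2 (i - m1))" for i
    have "a \<inter> b = {\<omega>\<in>space M. \<forall>i<m1+m2. B (r i) \<omega> \<in> C i}"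
    proof (intro set_eqI iffI)
      fix \<omega> assume "\<omega> \<in> a \<inter> b"
      then show "\<omega> \<in> {\<omega>\<in>space M. \<forall>i<m1+m2. B (r i) \<omega> \<in> C i}"
        unfolding a b r_def C_def by auto
    next
      fix \<omega> assume w: "\<omega> \<in> {\<omega>\<in>space M. \<forall>i<m1+m2. B (r i) \<omega> \<in> C i}"
      have w2: "\<And>i. i < m1 + m2 \<Longrightarrow> B (r i) \<omega> \<in> C i" using w by blast
      have "B (r1 i) \<omega> \<in> C1 i" if "i < m1" for i using w2[of i] that by (simp add: r_def C_def)
      moreover have "B (r2 i) \<omega> \<in> C2 i" if "i < m2" for i
        using w2[of "i + m1"] that by (simp add: r_def C_def)
      ultimately show "\<omega> \<in> a \<inter> b" using w unfolding a b by auto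
    qed
    moreover have "\<forall>i<m1+m2. 0 \<le> r i \<and> r i \<le> t" "\<forall>i<m1+m2. C i \<in> sets borel"
      using rC1 rC2 by (auto simp: r_def C_def)
    ultimately show "a \<inter> b \<in> G1" unfolding G1_def by blast
  qed
  moreover have "Int_stable G2"
  proof (rule Int_stableI)
    fix a b assume "a \<in> G2" "b \<in> G2"
    then obtain A A' :: "real set" where "a = (\<lambda>\<omega>. B s \<omega> - B t \<omega>) -` A \<inter> space M" "A \<in> sets borel"
      "b = (\<lambda>\<omega>. B s \<omega> - B t \<omega>) -` A' \<inter> space M" "A' \<in> sets borel" unfolding G2_def by blast
    then show "a \<inter> b \<in> G2" unfolding G2_def by (intro CollectI exI[of _ "A \<inter> A'"]) auto
  qed
  ultimately have ind: "indep_set (sigma_sets (space M) G1) (sigma_sets (space M) G2)"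
    by (rule indep_set_sigma_sets)
  have sub: "nat_filt_sets M B (ennreal t) \<subseteq> sigma_sets (space M) G1"
    unfolding nat_filt_sets_def
  proof (rule sigma_sets_mono)
    show "(\<Union>s\<in>{s. 0 \<le> s \<and> ennreal s \<le> ennreal t}. {B s -` A \<inter> space M | A. A \<in> sets borel}) \<subseteq> sigma_sets (space M) G1"
    proof
      fix x assume "x \<in> (\<Union>s\<in>{s. 0 \<le> s \<and> ennreal s \<le> ennreal t}. {B s -` A \<inter> space M | A. A \<in> sets borel})"
      then obtain r A where rA: "0 \<le> r" "ennreal r \<le> ennreal t" "A \<in> sets borel" "x = B r -` A \<inter> space M" by blast
      have "r \<le> t" using rA t by (simp add: ennreal_le_iff)
      have "x = {\<omega>\<in>space M. \<forall>i<(1::nat). B ((\<lambda>_. r) i) \<omega> \<in> (\<lambda>_. A) i}" using rA by auto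
      then have "x \<in> G1" unfolding G1_def using rA \<open>r \<le> t\<close>
        by (intro CollectI exI[of _ "1::nat"] exI[of _ "\<lambda>_. r"] exI[of _ "\<lambda>_. A"]) simp
      then show "x \<in> sigma_sets (space M) G1" by (rule sigma_sets.Basic)
    qed
  qed
  have ind2: "sigma_sets (space M) G1 \<subseteq> events" "sigma_sets (space M) G2 \<subseteq> events"
    "\<And>a b. a \<in> sigma_sets (space M) G1 \<Longrightarrow> b \<in> sigma_sets (space M) G2 \<Longrightarrow> prob (a \<inter> b) = prob a * prob b"
    using ind unfolding indep_sets2_eq by auto
  show ?thesis unfolding G2_def[symmetric] indep_sets2_eq
  proof (intro conjI ballI)
    show "nat_filt_sets M B (ennreal t) \<subseteq> events" using sub ind2(1) by (rule order_trans)
    show "sigma_sets (space M) G2 \<subseteq> events" by (rule ind2(2))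
    fix a b assume "a \<in> nat_filt_sets M B (ennreal t)" "b \<in> sigma_sets (space M) G2"
    then show "prob (a \<inter> b) = prob a * prob b" using sub by (intro ind2(3)) auto
  qed
qed

end

context bm begin

abbreviation "NF t \<equiv> sigma (space M) (nat_filt_sets M B (ennreal t))"

lemma NF_space: "space (NF t) = space M"
  by (simp add: space_measure_of_conv)

lemma NF_sets: "sets (NF t) = nat_filt_sets M B (ennreal t)"
  using nat_filt_pow by (simp add: sets_measure_of nat_filt_sigma)

lemma subalg_NF: "subalgebra M (NF t)"
  unfolding subalgebra_def using NF_sets nat_filt_sub NF_space by simp

lemma B_meas_NF: assumes "0 \<le> r" "r \<le> t" shows "B r \<in> borel_measurable (NF t)"
proof (rule measurableI)
  fix x assume "x \<in> space (NF t)" then show "B r x \<in> space borel" by simp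
next
  fix A :: "real set" assume A: "A \<in> sets borel"
  have "B r -` A \<inter> space M \<in> nat_filt_sets M B (ennreal t)"
    unfolding nat_filt_sets_def
    by (rule sigma_sets.Basic) (use assms A in \<open>auto intro: ennreal_leI\<close>)
  then show "B r -` A \<inter> space (NF t) \<in> sets (NF t)" by (simp add: NF_sets NF_space)
qed

lemma indep_prod:
  fixes V :: "'a \<Rightarrow> real" and g :: "real \<Rightarrow> real"
  assumes t: "0 \<le> t" "t < s" and V: "V \<in> borel_measurable (NF t)" "\<And>\<omega>. 0 \<le> V \<omega>"
    and g: "g \<in> borel_measurable borel" "\<And>x. 0 \<le> g x"
  shows "(\<integral>\<^sup>+\<omega>. ennreal (V \<omega> * g (B s \<omega> - B t \<omega>)) \<partial>M)
       = (\<integral>\<^sup>+\<omega>. ennreal (V \<omega>) \<partial>M) * (\<integral>\<^sup>+\<omega>. ennreal (g (B s \<omega> - B t \<omega>)) \<partial>M)"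
proof -
  define W where "W \<omega> = g (B s \<omega> - B t \<omega>)" for \<omega>
  have "B s \<in> borel_measurable M" "B t \<in> borel_measurable M" using B_meas t by simp_all
  then have Dm: "(\<lambda>\<omega>. B s \<omega> - B t \<omega>) \<in> borel_measurable M" by (rule borel_measurable_diff)
  have VM: "V \<in> borel_measurable M" by (rule measurable_from_subalg[OF subalg_NF V(1)])
  have WM: "W \<in> borel_measurable M" unfolding W_def by (rule measurable_compose[OF Dm g(1)])
  have ic: "indep_set (nat_filt_sets M B (ennreal t))
           (sigma_sets (space M) {(\<lambda>\<omega>. B s \<omega> - B t \<omega>) -` A \<inter> space M | A. A \<in> sets borel})"
    by (rule indep_core[OF t])
  have sub1: "sigma_sets (space M) {V -` A \<inter> space M | A. A \<in> sets borel} \<subseteq> nat_filt_sets M B (ennreal t)"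
  proof -
    have "{V -` A \<inter> space M | A. A \<in> sets borel} \<subseteq> sigma_sets (space M) (nat_filt_sets M B (ennreal t))"
    proof
      fix x assume "x \<in> {V -` A \<inter> space M | A. A \<in> sets borel}"
      then obtain A :: "real set" where A: "A \<in> sets borel" "x = V -` A \<inter> space M" by blast
      have "V -` A \<inter> space (NF t) \<in> sets (NF t)" using measurable_sets[OF V(1) A(1)] .
      then have "x \<in> nat_filt_sets M B (ennreal t)" using A by (simp add: NF_sets NF_space)
      then show "x \<in> sigma_sets (space M) (nat_filt_sets M B (ennreal t))" by (simp add: nat_filt_sigma)
    qed
    then show ?thesis by (subst nat_filt_sigma[symmetric]) (rule sigma_sets_mono)
  qed
  have sub2: "sigma_sets (space M) {W -` A \<inter> space M | A. A \<in> sets borel}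
     \<subseteq> sigma_sets (space M) {(\<lambda>\<omega>. B s \<omega> - B t \<omega>) -` A \<inter> space M | A. A \<in> sets borel}"
  proof (rule sigma_sets_subseteq)
    show "{W -` A \<inter> space M | A. A \<in> sets borel} \<subseteq> {(\<lambda>\<omega>. B s \<omega> - B t \<omega>) -` A \<inter> space M | A. A \<in> sets borel}"
    proof
      fix x assume "x \<in> {W -` A \<inter> space M | A. A \<in> sets borel}"
      then obtain A :: "real set" where A: "A \<in> sets borel" "x = W -` A \<inter> space M" by blast
      have "g -` A \<inter> space borel \<in> sets borel" using measurable_sets[OF g(1) A(1)] .
      then have gA: "g -` A \<in> sets borel" by simp
      have "x = (\<lambda>\<omega>. B s \<omega> - B t \<omega>) -` (g -` A) \<inter> space M" using A by (auto simp: W_def)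
      then show "x \<in> {(\<lambda>\<omega>. B s \<omega> - B t \<omega>) -` A \<inter> space M | A. A \<in> sets borel}" using gA by blast
    qed
  qed
  have ic2: "indep_set (sigma_sets (space M) {V -` A \<inter> space M | A. A \<in> sets borel})
                       (sigma_sets (space M) {W -` A \<inter> space M | A. A \<in> sets borel})"
    using ic sub1 sub2 unfolding indep_sets2_eq by (meson subsetD subset_trans)
  have iv: "indep_var borel V borel W"
    unfolding indep_var_eq using VM WM ic2 by simp
  have iv': "indep_var borel (\<lambda>\<omega>. ennreal (V \<omega>)) borel (\<lambda>\<omega>. ennreal (W \<omega>))"
    using indep_var_compose[OF iv measurable_ennreal measurable_ennreal] by (simp add: comp_def)
  have cb: "case_bool (borel::ennreal measure) borel = (\<lambda>_. borel)" by (rule ext) (simp split: bool.split)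
  have ivs: "indep_vars (\<lambda>_. borel) (case_bool (\<lambda>\<omega>. ennreal (V \<omega>)) (\<lambda>\<omega>. ennreal (W \<omega>))) UNIV"
    using iv' unfolding indep_var_def cb .
  have "(\<integral>\<^sup>+\<omega>. (\<Prod>i\<in>UNIV. case_bool (\<lambda>\<omega>. ennreal (V \<omega>)) (\<lambda>\<omega>. ennreal (W \<omega>)) i \<omega>) \<partial>M)
     = (\<Prod>i\<in>UNIV. \<integral>\<^sup>+\<omega>. case_bool (\<lambda>\<omega>. ennreal (V \<omega>)) (\<lambda>\<omega>. ennreal (W \<omega>)) i \<omega> \<partial>M)"
    by (rule indep_vars_nn_integral[OF _ ivs]) simp_all
  then show ?thesis using V(2) g(2) by (simp add: UNIV_bool W_def mult.commute ennreal_mult)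
qed

end

locale bmz = bm M B for M :: "'a measure" and B +
  fixes \<gamma> \<sigma> :: real
  assumes gneg: "\<gamma> < 0"
begin

definition Z :: "real \<Rightarrow> 'a \<Rightarrow> real" where
  "Z t \<omega> = exp (\<gamma> * t + \<sigma> * B (max 0 t) \<omega> - \<sigma>^2 / 2 * t)"

lemma Z_pos: "0 < Z t \<omega>" by (simp add: Z_def)

lemma Z_joint: "(\<lambda>(\<omega>,t). Z t \<omega>) \<in> borel_measurable (P \<Otimes>\<^sub>M lborel)"
proof -
  note [measurable] = B_joint
  have "(\<lambda>p. exp (\<gamma> * snd p + \<sigma> * (\<lambda>(\<omega>,t). B (max 0 t) \<omega>) p - \<sigma>^2 / 2 * snd p)) \<in> borel_measurable (P \<Otimes>\<^sub>M lborel)"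
    by measurable
  then show ?thesis by (simp add: Z_def case_prod_beta)
qed

lemma Z_measM: "Z t \<in> borel_measurable M"
proof -
  have [measurable]: "B (max 0 t) \<in> borel_measurable M" by (rule B_meas) simp
  show ?thesis unfolding Z_def[abs_def] by measurable
qed

lemma Z_measP: "Z t \<in> borel_measurable P" using Z_measM by (rule measurable_completion)

lemma Z_meas_NF: assumes "0 \<le> t" shows "Z t \<in> borel_measurable (NF t)"
proof -
  have [measurable]: "B (max 0 t) \<in> borel_measurable (NF t)" by (rule B_meas_NF) (use assms in auto)
  show ?thesis unfolding Z_def[abs_def] by measurable
qed

lemma Z0: "\<omega> \<in> space M \<Longrightarrow> Z 0 \<omega> = 1" by (simp add: Z_def B0)

lemma Z_split: assumes "0 \<le> t" "t \<le> s"
  shows "Z s \<omega> = exp (\<gamma> * (s - t) - \<sigma>^2 / 2 * (s - t)) * (Z t \<omega> * exp (\<sigma> * (B s \<omega> - B t \<omega>)))"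
proof -
  have "max 0 s = s" "max 0 t = t" using assms by auto
  moreover have "\<gamma> * s + \<sigma> * B s \<omega> - \<sigma>^2 / 2 * s = (\<gamma> * (s - t) - \<sigma>^2 / 2 * (s - t)) + ((\<gamma> * t + \<sigma> * B t \<omega> - \<sigma>^2 / 2 * t) + \<sigma> * (B s \<omega> - B t \<omega>))"
    by (simp add: field_simps)
  ultimately show ?thesis unfolding Z_def by (simp only: exp_add)
qed

lemma F2M:
  assumes t: "0 \<le> t" "t \<le> s" and S: "S \<in> nat_filt_sets M B (ennreal t)"
  shows "(\<integral>\<^sup>+\<omega>. indicator S \<omega> * ennreal (Z s \<omega>) \<partial>M)
       = ennreal (exp (\<gamma> * (s - t))) * (\<integral>\<^sup>+\<omega>. indicator S \<omega> * ennreal (Z t \<omega>) \<partial>M)"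
proof (cases "s = t")
  case True then show ?thesis by simp
next
  case False
  then have ts: "t < s" using t by simp
  define V where "V \<omega> = indicator S \<omega> * Z t \<omega>" for \<omega>
  define c where "c = exp (\<gamma> * (s - t) - \<sigma>^2 / 2 * (s - t))"
  have S_NF: "S \<in> sets (NF t)" using S by (simp add: NF_sets)
  have V_NF: "V \<in> borel_measurable (NF t)" unfolding V_def[abs_def]
    using borel_measurable_indicator[OF S_NF] Z_meas_NF[OF t(1)] by (rule borel_measurable_times)
  have V_M: "V \<in> borel_measurable M" by (rule measurable_from_subalg[OF subalg_NF V_NF])
  have V0: "0 \<le> V \<omega>" for \<omega> using Z_pos[of t \<omega>] by (simp add: V_def)
  have [measurable]: "B s \<in> borel_measurable M" "B t \<in> borel_measurable M" using B_meas t by simp_all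
  then have Dm[measurable]: "(\<lambda>\<omega>. B s \<omega> - B t \<omega>) \<in> borel_measurable M" by (rule borel_measurable_diff)
  have eq1: "indicator S \<omega> * ennreal (Z s \<omega>) = ennreal c * ennreal (V \<omega> * exp (\<sigma> * (B s \<omega> - B t \<omega>)))" for \<omega>
    using Z_split[OF t, of \<omega>] less_imp_le[OF Z_pos[of t \<omega>]] by (auto simp: V_def c_def indicator_def ennreal_mult)
  have "(\<integral>\<^sup>+\<omega>. indicator S \<omega> * ennreal (Z s \<omega>) \<partial>M)
      = ennreal c * (\<integral>\<^sup>+\<omega>. ennreal (V \<omega> * exp (\<sigma> * (B s \<omega> - B t \<omega>))) \<partial>M)"
  proof -
    have "(\<lambda>x. exp (\<sigma> * x)) \<in> borel_measurable (borel::real measure)" by measurable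
    from measurable_compose[OF Dm this] have W_M: "(\<lambda>\<omega>. exp (\<sigma> * (B s \<omega> - B t \<omega>))) \<in> borel_measurable M" .
    have "(\<lambda>\<omega>. V \<omega> * exp (\<sigma> * (B s \<omega> - B t \<omega>))) \<in> borel_measurable M"
      using V_M W_M by (rule borel_measurable_times)
    from measurable_compose[OF this measurable_ennreal]
    show ?thesis unfolding eq1 by (intro nn_integral_cmult)
  qed
  also have "(\<integral>\<^sup>+\<omega>. ennreal (V \<omega> * exp (\<sigma> * (B s \<omega> - B t \<omega>))) \<partial>M)
      = (\<integral>\<^sup>+\<omega>. ennreal (V \<omega>) \<partial>M) * (\<integral>\<^sup>+\<omega>. ennreal (exp (\<sigma> * (B s \<omega> - B t \<omega>))) \<partial>M)"
    by (rule indep_prod[OF t(1) ts V_NF V0, of "\<lambda>x. exp (\<sigma> * x)"]) auto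
  also have "(\<integral>\<^sup>+\<omega>. ennreal (exp (\<sigma> * (B s \<omega> - B t \<omega>))) \<partial>M) = ennreal (exp (\<sigma>^2 * (s - t) / 2))"
    by (rule mgf_incr[OF t(1) ts])
  also have "(\<integral>\<^sup>+\<omega>. ennreal (V \<omega>) \<partial>M) = (\<integral>\<^sup>+\<omega>. indicator S \<omega> * ennreal (Z t \<omega>) \<partial>M)"
    by (intro nn_integral_cong) (simp add: V_def indicator_def)
  finally have "(\<integral>\<^sup>+\<omega>. indicator S \<omega> * ennreal (Z s \<omega>) \<partial>M)
     = ennreal (c * exp (\<sigma>^2 * (s - t) / 2)) * (\<integral>\<^sup>+\<omega>. indicator S \<omega> * ennreal (Z t \<omega>) \<partial>M)"
    using ennreal_mult[of c "exp (\<sigma>^2 * (s - t) / 2)"] by (simp add: c_def mult_ac)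
  also have "c * exp (\<sigma>^2 * (s - t) / 2) = exp (\<gamma> * (s - t))"
    unfolding c_def by (simp add: exp_add[symmetric] algebra_simps)
  finally show ?thesis .
qed

lemma F2:
  assumes t: "0 \<le> t" "t \<le> s" and A: "A \<in> sets (aug_filt M B (ennreal t))"
  shows "(\<integral>\<^sup>+\<omega>. indicator A \<omega> * ennreal (Z s \<omega>) \<partial>P)
       = ennreal (exp (\<gamma> * (s - t))) * (\<integral>\<^sup>+\<omega>. indicator A \<omega> * ennreal (Z t \<omega>) \<partial>P)"
proof -
  obtain S N where S: "S \<in> nat_filt_sets M B (ennreal t)" and N: "N \<in> null_sets P" and SN: "(A - S) \<union> (S - A) \<subseteq> N"
    using aug_approx[OF A] by blast
  have eq: "(\<integral>\<^sup>+\<omega>. indicator A \<omega> * ennreal (Z r \<omega>) \<partial>P) = (\<integral>\<^sup>+\<omega>. indicator S \<omega> * ennreal (Z r \<omega>) \<partial>M)" for r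
  proof -
    have "(\<integral>\<^sup>+\<omega>. indicator A \<omega> * ennreal (Z r \<omega>) \<partial>P) = (\<integral>\<^sup>+\<omega>. indicator S \<omega> * ennreal (Z r \<omega>) \<partial>P)"
    proof (rule nn_integral_cong_AE)
      show "AE \<omega> in P. indicator A \<omega> * ennreal (Z r \<omega>) = indicator S \<omega> * ennreal (Z r \<omega>)"
        using AE_not_in[OF N]
      proof (rule AE_mp, intro AE_I2 impI)
        fix \<omega> assume "\<omega> \<notin> N"
        then have "(\<omega> \<in> A) = (\<omega> \<in> S)" using SN by blast
        then show "indicator A \<omega> * ennreal (Z r \<omega>) = indicator S \<omega> * ennreal (Z r \<omega>)"
          by (simp add: indicator_def)
      qed
    qed
    also have "\<dots> = (\<integral>\<^sup>+\<omega>. indicator S \<omega> * ennreal (Z r \<omega>) \<partial>M)" by (rule nn_integral_completion)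
    finally show ?thesis .
  qed
  show ?thesis unfolding eq by (rule F2M[OF t S])
qed

end

context bmz begin

definition Sset :: "ennreal \<Rightarrow> real set" where
  "Sset s = {t. 0 \<le> t \<and> ennreal t \<le> s}"

definition Iz :: "'a \<Rightarrow> ennreal \<Rightarrow> ennreal" where
  "Iz \<omega> s = (\<integral>\<^sup>+t. indicator (Sset s) t * ennreal (Z t \<omega>) \<partial>lborel)"

definition U :: "'a \<Rightarrow> ennreal \<Rightarrow> ennreal" where
  "U \<omega> s = ennreal (- \<gamma>) * Iz \<omega> s + (if s = \<infinity> then 0 else ennreal (Z (enn2real s) \<omega>))"

lemma Z_joint'[measurable]: "(\<lambda>p. Z (snd p) (fst p)) \<in> borel_measurable (P \<Otimes>\<^sub>M lborel)"
  using Z_joint by (simp add: case_prod_beta)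

lemma Z_measP'[measurable]: "Z t \<in> borel_measurable P" by (rule Z_measP)

lemma Z_t_meas: "\<omega> \<in> space M \<Longrightarrow> (\<lambda>t. Z t \<omega>) \<in> borel_measurable lborel"
  using measurable_Pair2[OF Z_joint', of \<omega>] by simp

lemma Iz_meas:
  assumes T[measurable]: "T \<in> borel_measurable P"
  shows "(\<lambda>\<omega>. Iz \<omega> (T \<omega>)) \<in> borel_measurable P"
proof -
  have "(\<lambda>p. indicator (Sset (T (fst p))) (snd p) * ennreal (Z (snd p) (fst p))) \<in> borel_measurable (P \<Otimes>\<^sub>M lborel)"
  proof -
    have "(\<lambda>p. indicator (Sset (T (fst p))) (snd p) * ennreal (Z (snd p) (fst p)))
        = (\<lambda>p. (if 0 \<le> snd p \<and> ennreal (snd p) \<le> T (fst p) then 1 else 0) * ennreal (Z (snd p) (fst p)))"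
      by (auto simp: Sset_def indicator_def fun_eq_iff)
    also have "\<dots> \<in> borel_measurable (P \<Otimes>\<^sub>M lborel)" by measurable
    finally show ?thesis .
  qed
  then have "(\<lambda>(\<omega>,t). indicator (Sset (T \<omega>)) t * ennreal (Z t \<omega>)) \<in> borel_measurable (P \<Otimes>\<^sub>M lborel)"
    by (simp add: case_prod_beta)
  from lborel.borel_measurable_nn_integral[OF this] show ?thesis by (simp add: Iz_def)
qed

lemma U_meas:
  assumes T[measurable]: "T \<in> borel_measurable P"
  shows "(\<lambda>\<omega>. U \<omega> (T \<omega>)) \<in> borel_measurable P"
proof -
  have [measurable]: "(\<lambda>\<omega>. Iz \<omega> (T \<omega>)) \<in> borel_measurable P" by (rule Iz_meas[OF T])
  have "(\<lambda>\<omega>. (\<omega>, enn2real (T \<omega>))) \<in> P \<rightarrow>\<^sub>M P \<Otimes>\<^sub>M lborel"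
    by (intro measurable_Pair measurable_ident_sets) (simp_all add: measurable_lborel2)
  from measurable_compose[OF this Z_joint'] have [measurable]: "(\<lambda>\<omega>. Z (enn2real (T \<omega>)) \<omega>) \<in> borel_measurable P"
    by simp
  show ?thesis unfolding U_def by measurable
qed

lemma Z_cont: assumes "\<omega> \<in> space M" shows "continuous_on {0..} (\<lambda>t. Z t \<omega>)"
proof -
  have "continuous_on {0..} (\<lambda>t. exp (\<gamma> * t + \<sigma> * B t \<omega> - \<sigma>^2 / 2 * t))"
    using B_cont[OF assms] by (intro continuous_intros) auto
  then show ?thesis by (rule continuous_on_cong[THEN iffD1, rotated 2]) (auto simp: Z_def)
qed

lemma EZ: assumes "0 \<le> s" shows "(\<integral>\<^sup>+\<omega>. ennreal (Z s \<omega>) \<partial>P) = ennreal (exp (\<gamma> * s))"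
proof -
  have "space M \<in> sets (aug_filt M B (ennreal 0))"
    using sets.top[of "aug_filt M B (ennreal 0)"] by (simp add: aug_space)
  from F2[OF order_refl assms this]
  have "(\<integral>\<^sup>+\<omega>. indicator (space M) \<omega> * ennreal (Z s \<omega>) \<partial>P)
     = ennreal (exp (\<gamma> * s)) * (\<integral>\<^sup>+\<omega>. indicator (space M) \<omega> * ennreal (Z 0 \<omega>) \<partial>P)" by simp
  also have "(\<integral>\<^sup>+\<omega>. indicator (space M) \<omega> * ennreal (Z 0 \<omega>) \<partial>P) = (\<integral>\<^sup>+\<omega>. 1 \<partial>P)"
    by (intro nn_integral_cong) (simp add: Z0)
  also have "(\<integral>\<^sup>+\<omega>. 1 \<partial>P) = 1" using prob_space.emeasure_space_1[OF prob_P] by simp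
  also have "(\<integral>\<^sup>+\<omega>. indicator (space M) \<omega> * ennreal (Z s \<omega>) \<partial>P) = (\<integral>\<^sup>+\<omega>. ennreal (Z s \<omega>) \<partial>P)"
    by (intro nn_integral_cong) simp
  finally show ?thesis by simp
qed

lemma Jh:
  assumes "a \<le> b"
  shows "(\<integral>\<^sup>+t. indicator {a<..b} t * ennreal (exp (\<gamma> * (t - a))) \<partial>lborel)
       = ennreal ((1 - exp (\<gamma> * (b - a))) / (- \<gamma>))"
proof -
  have "(\<integral>\<^sup>+t. indicator {a<..b} t * ennreal (exp (\<gamma> * (t - a))) \<partial>lborel)
      = (\<integral>\<^sup>+t. ennreal (indicator {a..b} t * exp (\<gamma> * (t - a))) \<partial>lborel)"
  proof (rule nn_integral_cong_AE)
    show "AE t in lborel. indicator {a<..b} t * ennreal (exp (\<gamma> * (t - a))) = ennreal (indicator {a..b} t * exp (\<gamma> * (t - a)))"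
      using AE_lborel_singleton[of a] by eventually_elim (auto simp: indicator_def)
  qed
  also have "\<dots> = ennreal ((1 - exp (\<gamma> * (b - a))) / (- \<gamma>))"
  proof (rule nn_integral_has_integral_lebesgue)
    show "0 \<le> exp (\<gamma> * (x - a))" for x by simp
    have "((\<lambda>t. exp (\<gamma> * (t - a))) has_integral ((\<lambda>t. exp (\<gamma> * (t - a)) / \<gamma>) b - (\<lambda>t. exp (\<gamma> * (t - a)) / \<gamma>) a)) {a..b}"
    proof (rule fundamental_theorem_of_calculus[OF assms])
      fix x assume "x \<in> {a..b}"
      have "((\<lambda>t. exp (\<gamma> * (t - a)) / \<gamma>) has_real_derivative (exp (\<gamma> * (x - a)) * (\<gamma> * 1) / \<gamma>)) (at x within {a..b})"
        using gneg by (intro derivative_eq_intros) auto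
      then show "((\<lambda>t. exp (\<gamma> * (t - a)) / \<gamma>) has_vector_derivative exp (\<gamma> * (x - a))) (at x within {a..b})"
        using gneg by (simp add: has_real_derivative_iff_has_vector_derivative)
    qed
    moreover have "(\<lambda>t. exp (\<gamma> * (t - a)) / \<gamma>) b - (\<lambda>t. exp (\<gamma> * (t - a)) / \<gamma>) a = (1 - exp (\<gamma> * (b - a))) / (- \<gamma>)"
      using gneg by (simp add: field_simps)
    ultimately show "((\<lambda>t. exp (\<gamma> * (t - a))) has_integral ((1 - exp (\<gamma> * (b - a))) / (- \<gamma>))) {a..b}"
      by simp
  qed
  finally show ?thesis .
qed

lemma pair_PL: "pair_sigma_finite P (lborel::real measure)"
proof -
  interpret PP: prob_space P by (rule prob_P)
  show ?thesis unfolding pair_sigma_finite_def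
    using PP.sigma_finite_measure_axioms lborel.sigma_finite_measure_axioms by simp
qed

lemma stepA_key:
  assumes A: "A \<in> sets (aug_filt M B (ennreal a))" and a: "0 \<le> a" and h: "0 < h"
  shows "(\<integral>\<^sup>+\<omega>. indicator A \<omega> * (ennreal (- \<gamma>) * (\<integral>\<^sup>+t. indicator {a<..a+h} t * ennreal (Z t \<omega>) \<partial>lborel)
              + ennreal (Z (a+h) \<omega>)) \<partial>P)
       = (\<integral>\<^sup>+\<omega>. indicator A \<omega> * ennreal (Z a \<omega>) \<partial>P)"
proof -
  define E where "E = (\<integral>\<^sup>+\<omega>. indicator A \<omega> * ennreal (Z a \<omega>) \<partial>P)"
  define J where "J = (1 - exp (\<gamma> * h)) / (- \<gamma>)"
  have AP[measurable]: "A \<in> sets P" using A aug_sub by blast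
  have jf[measurable]: "(\<lambda>(\<omega>,t). indicator A \<omega> * (indicator {a<..a+h} t * ennreal (Z t \<omega>))) \<in> borel_measurable (P \<Otimes>\<^sub>M lborel)"
  proof -
    have "(\<lambda>p. indicator A (fst p) * (indicator {a<..a+h} (snd p) * ennreal (Z (snd p) (fst p)))) \<in> borel_measurable (P \<Otimes>\<^sub>M lborel)"
      by measurable
    then show ?thesis by (simp add: case_prod_beta)
  qed
  have jf2: "(\<lambda>(\<omega>,t). indicator {a<..a+h} t * ennreal (Z t \<omega>)) \<in> borel_measurable (P \<Otimes>\<^sub>M lborel)"
  proof -
    have "(\<lambda>p. indicator {a<..a+h} (snd p) * ennreal (Z (snd p) (fst p))) \<in> borel_measurable (P \<Otimes>\<^sub>M lborel)"
      by measurable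
    then show ?thesis by (simp add: case_prod_beta)
  qed
  have I_meas[measurable]: "(\<lambda>\<omega>. \<integral>\<^sup>+t. indicator {a<..a+h} t * ennreal (Z t \<omega>) \<partial>lborel) \<in> borel_measurable P"
    by (rule lborel.borel_measurable_nn_integral[OF jf2])
  have "(\<integral>\<^sup>+\<omega>. indicator A \<omega> * (ennreal (- \<gamma>) * (\<integral>\<^sup>+t. indicator {a<..a+h} t * ennreal (Z t \<omega>) \<partial>lborel)
              + ennreal (Z (a+h) \<omega>)) \<partial>P)
     = (\<integral>\<^sup>+\<omega>. ennreal (- \<gamma>) * (indicator A \<omega> * (\<integral>\<^sup>+t. indicator {a<..a+h} t * ennreal (Z t \<omega>) \<partial>lborel))
              + indicator A \<omega> * ennreal (Z (a+h) \<omega>) \<partial>P)"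
    by (intro nn_integral_cong) (simp add: distrib_left mult_ac)
  also have "\<dots> = ennreal (- \<gamma>) * (\<integral>\<^sup>+\<omega>. indicator A \<omega> * (\<integral>\<^sup>+t. indicator {a<..a+h} t * ennreal (Z t \<omega>) \<partial>lborel) \<partial>P)
              + (\<integral>\<^sup>+\<omega>. indicator A \<omega> * ennreal (Z (a+h) \<omega>) \<partial>P)"
    by (subst nn_integral_add) (measurable, subst nn_integral_cmult, measurable)
  also have "(\<integral>\<^sup>+\<omega>. indicator A \<omega> * ennreal (Z (a+h) \<omega>) \<partial>P) = ennreal (exp (\<gamma> * h)) * E"
    unfolding E_def using F2[OF a _ A, of "a+h"] h by simp
  also have "(\<integral>\<^sup>+\<omega>. indicator A \<omega> * (\<integral>\<^sup>+t. indicator {a<..a+h} t * ennreal (Z t \<omega>) \<partial>lborel) \<partial>P)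
      = (\<integral>\<^sup>+\<omega>. (\<integral>\<^sup>+t. indicator A \<omega> * (indicator {a<..a+h} t * ennreal (Z t \<omega>)) \<partial>lborel) \<partial>P)"
  proof (intro nn_integral_cong)
    fix \<omega> assume "\<omega> \<in> space P"
    then have "\<omega> \<in> space M" by simp
    from Z_t_meas[OF this] have [measurable]: "(\<lambda>t. Z t \<omega>) \<in> borel_measurable lborel" .
    show "indicator A \<omega> * (\<integral>\<^sup>+t. indicator {a<..a+h} t * ennreal (Z t \<omega>) \<partial>lborel)
        = (\<integral>\<^sup>+t. indicator A \<omega> * (indicator {a<..a+h} t * ennreal (Z t \<omega>)) \<partial>lborel)"
      by (rule nn_integral_cmult[symmetric]) measurable
  qed
  also have "\<dots> = (\<integral>\<^sup>+t. (\<integral>\<^sup>+\<omega>. indicator A \<omega> * (indicator {a<..a+h} t * ennreal (Z t \<omega>)) \<partial>P) \<partial>lborel)"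
    using pair_sigma_finite.Fubini'[OF pair_PL jf] by simp
  also have "\<dots> = (\<integral>\<^sup>+t. indicator {a<..a+h} t * ennreal (exp (\<gamma> * (t - a))) * E \<partial>lborel)"
  proof (intro nn_integral_cong)
    fix t :: real
    show "(\<integral>\<^sup>+\<omega>. indicator A \<omega> * (indicator {a<..a+h} t * ennreal (Z t \<omega>)) \<partial>P)
        = indicator {a<..a+h} t * ennreal (exp (\<gamma> * (t - a))) * E"
    proof (cases "t \<in> {a<..a+h}")
      case True
      then have "a \<le> t" by simp
      have "(\<integral>\<^sup>+\<omega>. indicator A \<omega> * (indicator {a<..a+h} t * ennreal (Z t \<omega>)) \<partial>P)
          = (\<integral>\<^sup>+\<omega>. indicator A \<omega> * ennreal (Z t \<omega>) \<partial>P)" using True by simp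
      also have "\<dots> = ennreal (exp (\<gamma> * (t - a))) * E" unfolding E_def by (rule F2[OF a \<open>a \<le> t\<close> A])
      finally show ?thesis using True by simp
    qed simp
  qed
  also have "\<dots> = (\<integral>\<^sup>+t. indicator {a<..a+h} t * ennreal (exp (\<gamma> * (t - a))) \<partial>lborel) * E"
    by (subst nn_integral_multc) measurable
  also have "\<dots> = ennreal J * E" unfolding J_def using Jh[of a "a+h"] h by simp
  finally have "(\<integral>\<^sup>+\<omega>. indicator A \<omega> * (ennreal (- \<gamma>) * (\<integral>\<^sup>+t. indicator {a<..a+h} t * ennreal (Z t \<omega>) \<partial>lborel)
              + ennreal (Z (a+h) \<omega>)) \<partial>P) = ennreal (- \<gamma>) * (ennreal J * E) + ennreal (exp (\<gamma> * h)) * E" .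
  also have "\<dots> = ennreal ((- \<gamma>) * J + exp (\<gamma> * h)) * E"
  proof -
    have J0: "0 \<le> J" unfolding J_def using gneg h by (simp add: divide_nonneg_neg mult_neg_pos less_imp_le)
    have "ennreal (- \<gamma>) * (ennreal J * E) + ennreal (exp (\<gamma> * h)) * E = (ennreal ((- \<gamma>) * J) + ennreal (exp (\<gamma> * h))) * E"
    proof -
      have m: "ennreal ((- \<gamma>) * J) = ennreal (- \<gamma>) * ennreal J" using gneg J0 by (intro ennreal_mult) auto
      show ?thesis by (simp only: m distrib_right mult.assoc)
    qed
    also have "\<dots> = ennreal ((- \<gamma>) * J + exp (\<gamma> * h)) * E"
      using gneg J0 by (subst ennreal_plus) (auto simp: mult_nonpos_nonneg)
    finally show ?thesis .
  qed
  also have "(- \<gamma>) * J + exp (\<gamma> * h) = 1" unfolding J_def using gneg by (simp add: field_simps)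
  finally show ?thesis by (simp add: E_def)
qed

end

context bmz begin

definition disc :: "real \<Rightarrow> ('a \<Rightarrow> ennreal) \<Rightarrow> 'a \<Rightarrow> ennreal" where
  "disc h T \<omega> = (if T \<omega> = \<infinity> then \<infinity> else ennreal (h * real_of_int \<lceil>enn2real (T \<omega>) / h\<rceil>))"

lemma disc_meas: assumes [measurable]: "T \<in> borel_measurable P" shows "disc h T \<in> borel_measurable P"
  unfolding disc_def[abs_def] by measurable

lemma disc_fin:
  assumes h: "0 < h" and T: "T \<omega> \<noteq> \<infinity>"
  shows "disc h T \<omega> = ennreal (h * real_of_int \<lceil>enn2real (T \<omega>) / h\<rceil>)"
    and "enn2real (T \<omega>) \<le> h * real_of_int \<lceil>enn2real (T \<omega>) / h\<rceil>"
    and "h * real_of_int \<lceil>enn2real (T \<omega>) / h\<rceil> < enn2real (T \<omega>) + h"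
    and "0 \<le> h * real_of_int \<lceil>enn2real (T \<omega>) / h\<rceil>"
proof -
  define x where "x = enn2real (T \<omega>)"
  have x0: "0 \<le> x" by (simp add: x_def)
  show "disc h T \<omega> = ennreal (h * real_of_int \<lceil>enn2real (T \<omega>) / h\<rceil>)" using T by (simp add: disc_def)
  have "x / h \<le> real_of_int \<lceil>x / h\<rceil>" by (rule le_of_int_ceiling)
  then have "x \<le> real_of_int \<lceil>x / h\<rceil> * h" using pos_divide_le_eq[OF h] by blast
  then show "enn2real (T \<omega>) \<le> h * real_of_int \<lceil>enn2real (T \<omega>) / h\<rceil>"
    by (simp add: x_def[symmetric] mult.commute)
  have "real_of_int \<lceil>x / h\<rceil> < x / h + 1" by linarith
  then have "real_of_int \<lceil>x / h\<rceil> - 1 < x / h" by simp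
  then have "(real_of_int \<lceil>x / h\<rceil> - 1) * h < x" using pos_less_divide_eq[OF h] by blast
  then show "h * real_of_int \<lceil>enn2real (T \<omega>) / h\<rceil> < enn2real (T \<omega>) + h"
    by (simp add: x_def[symmetric] algebra_simps)
  have "0 \<le> x / h" using x0 h by simp
  then have "0 \<le> real_of_int \<lceil>x / h\<rceil>" by linarith
  then show "0 \<le> h * real_of_int \<lceil>enn2real (T \<omega>) / h\<rceil>" using h by (simp add: x_def[symmetric])
qed

lemma disc_ge:
  assumes h: "0 < h" and lt: "ennreal (real m * h) < T \<omega>"
  shows "ennreal (real m * h + h) \<le> disc h T \<omega>"
proof (cases "T \<omega> = \<infinity>")
  case True then show ?thesis by (simp add: disc_def)
next
  case False
  define x where "x = enn2real (T \<omega>)"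
  have Tx: "T \<omega> = ennreal x" using False by (simp add: x_def ennreal_enn2real_if)
  have x0: "0 \<le> x" by (simp add: x_def)
  have mh0: "0 \<le> real m * h" using h by simp
  have "real m * h < x" using lt ennreal_less_iff[OF mh0, of x] by (simp add: Tx)
  then have "real m < x / h" using h by (simp add: field_simps)
  then have "int m < \<lceil>x / h\<rceil>" by (simp add: less_ceiling_iff)
  then have "real m + 1 \<le> real_of_int \<lceil>x / h\<rceil>" by linarith
  then have "(real m + 1) * h \<le> real_of_int \<lceil>x / h\<rceil> * h" using h by (intro mult_right_mono) auto
  then have "real m * h + h \<le> h * real_of_int \<lceil>x / h\<rceil>" by (simp add: algebra_simps)
  then have "ennreal (real m * h + h) \<le> ennreal (h * real_of_int \<lceil>x / h\<rceil>)" by (rule ennreal_leI)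
  then show ?thesis using disc_fin(1)[of h T \<omega>, OF h False] by (simp add: x_def)
qed

lemma disc_le:
  assumes h: "0 < h" and le: "T \<omega> \<le> ennreal (real m * h)"
  shows "disc h T \<omega> \<le> ennreal (real m * h)"
proof -
  have False': "T \<omega> \<noteq> \<infinity>" using le by (auto simp: top_unique)
  define x where "x = enn2real (T \<omega>)"
  have Tx: "T \<omega> = ennreal x" using False' by (simp add: x_def ennreal_enn2real_if)
  have x0: "0 \<le> x" by (simp add: x_def)
  have "x \<le> real m * h" using le x0 h by (simp add: Tx ennreal_le_iff)
  then have "x / h \<le> real m" using h by (simp add: field_simps)
  then have "\<lceil>x / h\<rceil> \<le> int m" by (simp add: ceiling_le_iff)
  then have "real_of_int \<lceil>x / h\<rceil> \<le> real m" by linarith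
  then have "h * real_of_int \<lceil>x / h\<rceil> \<le> real m * h" using h by (simp add: mult.commute)
  then have "ennreal (h * real_of_int \<lceil>x / h\<rceil>) \<le> ennreal (real m * h)" by (rule ennreal_leI)
  then show ?thesis using disc_fin(1)[of h T \<omega>, OF h False'] by (simp add: x_def)
qed

lemma Sset_real: "0 \<le> x \<Longrightarrow> Sset (ennreal x) = {0..x}"
  by (auto simp: Sset_def)

lemma Iz_zero: assumes "\<omega> \<in> space M" shows "Iz \<omega> 0 = 0"
proof -
  have "Iz \<omega> 0 = (\<integral>\<^sup>+(t::real). 0 \<partial>lborel)"
    unfolding Iz_def
  proof (rule nn_integral_cong_AE)
    show "AE t in lborel. indicator (Sset 0) t * ennreal (Z t \<omega>) = 0"
      using AE_lborel_singleton[of 0] by eventually_elim (auto simp: Sset_def indicator_def)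
  qed
  then show ?thesis by simp
qed

lemma U_zero: assumes "\<omega> \<in> space M" shows "U \<omega> 0 = 1"
  using Iz_zero[OF assms] Z0[OF assms] by (simp add: U_def)

lemma U_real: assumes "0 \<le> x" shows "U \<omega> (ennreal x) = ennreal (- \<gamma>) * Iz \<omega> (ennreal x) + ennreal (Z x \<omega>)"
  using assms by (simp add: U_def)

lemma Iz_split:
  assumes \<omega>: "\<omega> \<in> space M" and a: "0 \<le> a" and h: "0 \<le> h"
  shows "Iz \<omega> (ennreal (a + h)) = Iz \<omega> (ennreal a) + (\<integral>\<^sup>+t. indicator {a<..a+h} t * ennreal (Z t \<omega>) \<partial>lborel)"
proof -
  have [measurable]: "(\<lambda>t. Z t \<omega>) \<in> borel_measurable lborel" by (rule Z_t_meas[OF \<omega>])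
  have "Iz \<omega> (ennreal (a + h)) = (\<integral>\<^sup>+t. indicator {0..a} t * ennreal (Z t \<omega>) + indicator {a<..a+h} t * ennreal (Z t \<omega>) \<partial>lborel)"
    unfolding Iz_def Sset_real[of "a+h", OF add_nonneg_nonneg[OF a h]] using a h
    by (intro nn_integral_cong) (auto simp: indicator_def)
  also have "\<dots> = (\<integral>\<^sup>+t. indicator {0..a} t * ennreal (Z t \<omega>) \<partial>lborel) + (\<integral>\<^sup>+t. indicator {a<..a+h} t * ennreal (Z t \<omega>) \<partial>lborel)"
    by (rule nn_integral_add) measurable
  also have "(\<integral>\<^sup>+t. indicator {0..a} t * ennreal (Z t \<omega>) \<partial>lborel) = Iz \<omega> (ennreal a)"
    unfolding Iz_def using a by (simp add: Sset_real)
  finally show ?thesis .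
qed

lemma T_meas: assumes T: "stopping_time (aug_filt M B) T" shows "T \<in> borel_measurable P"
  by (rule measurable_stopping_time[OF T]) (use aug_sub aug_space in auto)

lemma stepA:
  assumes T: "stopping_time (aug_filt M B) T" and h: "0 < h"
  shows "(\<integral>\<^sup>+\<omega>. U \<omega> (min (disc h T \<omega>) (ennreal (real m * h))) \<partial>P) = 1"
proof (induction m)
  case 0
  have "(\<integral>\<^sup>+\<omega>. U \<omega> (min (disc h T \<omega>) (ennreal (real 0 * h))) \<partial>P) = (\<integral>\<^sup>+\<omega>. 1 \<partial>P)"
    by (intro nn_integral_cong) (simp add: U_zero)
  also have "\<dots> = 1" using prob_space.emeasure_space_1[OF prob_P] by simp
  finally show ?case .
next
  case (Suc m)
  define a where "a = real m * h"
  have a0: "0 \<le> a" using h by (simp add: a_def)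
  have sm: "real (Suc m) * h = a + h" by (simp add: a_def algebra_simps)
  define A where "A = {\<omega> \<in> space M. ennreal a < T \<omega>}"
  have A: "A \<in> sets (aug_filt M B (ennreal a))"
    using stopping_timeD2[OF T, of "ennreal a"] unfolding pred_def A_def by (simp add: aug_space)
  have AP[measurable]: "A \<in> sets P" using A aug_sub by blast
  have Tm[measurable]: "T \<in> borel_measurable P" by (rule T_meas[OF T])
  have dm[measurable]: "disc h T \<in> borel_measurable P" by (rule disc_meas[OF Tm])
  have Um: "(\<lambda>\<omega>. U \<omega> (min (disc h T \<omega>) (ennreal c))) \<in> borel_measurable P" for c
    by (rule U_meas) measurable
  define Q where "Q \<omega> = ennreal (- \<gamma>) * (\<integral>\<^sup>+t. indicator {a<..a+h} t * ennreal (Z t \<omega>) \<partial>lborel) + ennreal (Z (a+h) \<omega>)" for \<omega>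
  have jf2: "(\<lambda>(\<omega>,t). indicator {a<..a+h} t * ennreal (Z t \<omega>)) \<in> borel_measurable (P \<Otimes>\<^sub>M lborel)"
  proof -
    have "(\<lambda>p. indicator {a<..a+h} (snd p) * ennreal (Z (snd p) (fst p))) \<in> borel_measurable (P \<Otimes>\<^sub>M lborel)"
      by measurable
    then show ?thesis by (simp add: case_prod_beta)
  qed
  have [measurable]: "(\<lambda>\<omega>. \<integral>\<^sup>+t. indicator {a<..a+h} t * ennreal (Z t \<omega>) \<partial>lborel) \<in> borel_measurable P"
    by (rule lborel.borel_measurable_nn_integral[OF jf2])
  have Qm[measurable]: "Q \<in> borel_measurable P" unfolding Q_def[abs_def] by measurable
  have pw: "U \<omega> (min (disc h T \<omega>) (ennreal (a+h))) + indicator A \<omega> * ennreal (Z a \<omega>)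
          = U \<omega> (min (disc h T \<omega>) (ennreal a)) + indicator A \<omega> * Q \<omega>" if \<omega>: "\<omega> \<in> space P" for \<omega>
  proof (cases "\<omega> \<in> A")
    case True
    then have lt: "ennreal (real m * h) < T \<omega>" by (simp add: A_def a_def)
    have ge: "ennreal (a + h) \<le> disc h T \<omega>" using disc_ge[of h m T \<omega>, OF h lt] by (simp add: a_def)
    have m1: "min (disc h T \<omega>) (ennreal (a+h)) = ennreal (a+h)" using ge by (simp add: min_def)
    have "ennreal a \<le> ennreal (a + h)" using h by (intro ennreal_leI) simp
    then have m2: "min (disc h T \<omega>) (ennreal a) = ennreal a" using ge by (simp add: min_absorb2 order_trans)
    have \<omega>M: "\<omega> \<in> space M" using \<omega> by simp
    show ?thesis
      unfolding m1 m2 U_real[OF a0] U_real[OF add_nonneg_nonneg[OF a0 less_imp_le[OF h]]] Iz_split[OF \<omega>M a0 less_imp_le[OF h]] Q_def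
      using True a0 h by (simp add: distrib_left add_ac)
  next
    case False
    then have "\<not> ennreal (real m * h) < T \<omega>" using \<omega> by (simp add: A_def a_def)
    then have "T \<omega> \<le> ennreal (real m * h)" by simp
    from disc_le[of h T \<omega> m, OF h this] have le: "disc h T \<omega> \<le> ennreal a" by (simp add: a_def)
    have "ennreal a \<le> ennreal (a + h)" using h by (intro ennreal_leI) simp
    then have m1: "min (disc h T \<omega>) (ennreal (a+h)) = disc h T \<omega>" "min (disc h T \<omega>) (ennreal a) = disc h T \<omega>"
      using le by (auto simp: min_def)
    show ?thesis unfolding m1 using False by simp
  qed
  define E where "E = (\<integral>\<^sup>+\<omega>. indicator A \<omega> * ennreal (Z a \<omega>) \<partial>P)"
  have "(\<integral>\<^sup>+\<omega>. U \<omega> (min (disc h T \<omega>) (ennreal (a+h))) \<partial>P) + E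
      = (\<integral>\<^sup>+\<omega>. U \<omega> (min (disc h T \<omega>) (ennreal (a+h))) + indicator A \<omega> * ennreal (Z a \<omega>) \<partial>P)"
    unfolding E_def by (rule nn_integral_add[symmetric]) (use Um in measurable)
  also have "\<dots> = (\<integral>\<^sup>+\<omega>. U \<omega> (min (disc h T \<omega>) (ennreal a)) + indicator A \<omega> * Q \<omega> \<partial>P)"
    by (intro nn_integral_cong pw)
  also have "\<dots> = (\<integral>\<^sup>+\<omega>. U \<omega> (min (disc h T \<omega>) (ennreal a)) \<partial>P) + (\<integral>\<^sup>+\<omega>. indicator A \<omega> * Q \<omega> \<partial>P)"
    by (rule nn_integral_add) (use Um in measurable)
  also have "(\<integral>\<^sup>+\<omega>. U \<omega> (min (disc h T \<omega>) (ennreal a)) \<partial>P) = 1" using Suc.IH by (simp add: a_def)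
  also have "(\<integral>\<^sup>+\<omega>. indicator A \<omega> * Q \<omega> \<partial>P) = E"
    unfolding Q_def E_def by (rule stepA_key[OF A a0 h])
  finally have eq: "E + (\<integral>\<^sup>+\<omega>. U \<omega> (min (disc h T \<omega>) (ennreal (a+h))) \<partial>P) = E + 1" by (simp add: add_ac)
  have "E \<le> (\<integral>\<^sup>+\<omega>. ennreal (Z a \<omega>) \<partial>P)" unfolding E_def
    by (intro nn_integral_mono) (simp add: indicator_def)
  also have "\<dots> = ennreal (exp (\<gamma> * a))" by (rule EZ[OF a0])
  finally have "E \<noteq> \<infinity>" by (auto simp: top_unique)
  with eq have "(\<integral>\<^sup>+\<omega>. U \<omega> (min (disc h T \<omega>) (ennreal (a+h))) \<partial>P) = 1"
    by (simp add: ennreal_add_left_cancel)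
  then show ?case by (simp only: sm)
qed

end

context bmz begin

lemma Iz_mono: "s \<le> s' \<Longrightarrow> Iz \<omega> s \<le> Iz \<omega> s'"
  unfolding Iz_def by (intro nn_integral_mono) (auto simp: indicator_def Sset_def order_trans)

lemma liminf_le_const:
  fixes f :: "nat \<Rightarrow> ennreal"
  assumes "\<And>n. f n \<le> c" shows "liminf f \<le> c"
proof -
  have "liminf f \<le> liminf (\<lambda>n. c)" by (intro Liminf_mono) (use assms in auto)
  also have "\<dots> = c" by (rule Liminf_const) simp
  finally show ?thesis .
qed

lemma Iz_lim:
  assumes \<omega>: "\<omega> \<in> space M" and h: "0 < h"
  shows "(\<lambda>k. Iz \<omega> (ennreal (real k * h))) \<longlonglongrightarrow> Iz \<omega> \<infinity>"
proof -
  have [measurable]: "(\<lambda>t. Z t \<omega>) \<in> borel_measurable lborel" by (rule Z_t_meas[OF \<omega>])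
  define f where "f k t = indicator (Sset (ennreal (real k * h))) t * ennreal (Z t \<omega>)" for k t
  have Ss: "Sset (ennreal (real k * h)) = {0..real k * h}" for k using h by (intro Sset_real) simp
  have fm: "f k \<in> borel_measurable lborel" for k unfolding f_def Ss by measurable
  have inc: "incseq f"
  proof (intro monoI le_funI)
    fix k l :: nat and t assume "k \<le> l"
    then have "real k * h \<le> real l * h" using h by (simp add: mult_right_mono)
    then show "f k t \<le> f l t" unfolding f_def Ss by (auto simp: indicator_def)
  qed
  have sup: "(SUP k. f k t) = indicator (Sset \<infinity>) t * ennreal (Z t \<omega>)" for t
  proof (cases "0 \<le> t")
    case False then show ?thesis by (simp add: f_def Sset_def)
  next
    case True
    obtain K where K: "t < real K * h" using reals_Archimedean3[OF h] by blast
    have "f K t = ennreal (Z t \<omega>)" using True K by (simp add: f_def Ss)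
    moreover have "f k t \<le> ennreal (Z t \<omega>)" for k by (simp add: f_def indicator_def)
    ultimately have "(SUP k. f k t) = ennreal (Z t \<omega>)"
      by (intro antisym SUP_least) (auto intro: SUP_upper2[of K])
    then show ?thesis using True by (simp add: Sset_def)
  qed
  have "Iz \<omega> \<infinity> = (\<integral>\<^sup>+t. (SUP k. f k t) \<partial>lborel)" unfolding Iz_def sup ..
  also have "\<dots> = (SUP k. \<integral>\<^sup>+t. f k t \<partial>lborel)" by (rule nn_integral_monotone_convergence_SUP[OF inc fm])
  also have "\<dots> = (SUP k. Iz \<omega> (ennreal (real k * h)))" by (simp add: f_def Iz_def)
  finally have eq: "Iz \<omega> \<infinity> = (SUP k. Iz \<omega> (ennreal (real k * h)))" .
  have "incseq (\<lambda>k. Iz \<omega> (ennreal (real k * h)))"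
  proof (intro monoI Iz_mono)
    fix k l :: nat assume "k \<le> l"
    then have "real k * h \<le> real l * h" using h by (simp add: mult_right_mono)
    then show "ennreal (real k * h) \<le> ennreal (real l * h)" by (rule ennreal_leI)
  qed
  from LIMSEQ_SUP[OF this] show ?thesis unfolding eq .
qed

lemma stepB:
  assumes T: "stopping_time (aug_filt M B) T" and h: "0 < h"
  shows "(\<integral>\<^sup>+\<omega>. U \<omega> (disc h T \<omega>) \<partial>P) \<le> 1"
proof -
  have Tm[measurable]: "T \<in> borel_measurable P" by (rule T_meas[OF T])
  have dm[measurable]: "disc h T \<in> borel_measurable P" by (rule disc_meas[OF Tm])
  define u where "u k \<omega> = U \<omega> (min (disc h T \<omega>) (ennreal (real k * h)))" for k \<omega>
  have um: "u k \<in> borel_measurable P" for k unfolding u_def by (rule U_meas) measurable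
  have pw: "U \<omega> (disc h T \<omega>) \<le> liminf (\<lambda>k. u k \<omega>)" if \<omega>: "\<omega> \<in> space P" for \<omega>
  proof (cases "disc h T \<omega> = \<infinity>")
    case True
    have \<omega>M: "\<omega> \<in> space M" using \<omega> by simp
    have lim: "(\<lambda>k. ennreal (- \<gamma>) * Iz \<omega> (ennreal (real k * h))) \<longlonglongrightarrow> ennreal (- \<gamma>) * Iz \<omega> \<infinity>"
      by (rule ennreal_tendsto_cmult[OF _ Iz_lim[OF \<omega>M h]]) simp
    have "U \<omega> (disc h T \<omega>) = ennreal (- \<gamma>) * Iz \<omega> \<infinity>" using True by (simp add: U_def)
    also have "\<dots> = liminf (\<lambda>k. ennreal (- \<gamma>) * Iz \<omega> (ennreal (real k * h)))"
      by (rule lim_imp_Liminf[symmetric, OF _ lim]) simp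
    also have "\<dots> \<le> liminf (\<lambda>k. u k \<omega>)"
    proof (intro Liminf_mono always_eventually allI)
      fix k
      have "0 \<le> real k * h" using h by simp
      then show "ennreal (- \<gamma>) * Iz \<omega> (ennreal (real k * h)) \<le> u k \<omega>"
        using True by (simp add: u_def U_real add_increasing2)
    qed
    finally show ?thesis .
  next
    case False
    define y where "y = enn2real (disc h T \<omega>)"
    have dy: "disc h T \<omega> = ennreal y" using False by (simp add: y_def ennreal_enn2real_if)
    obtain K where K: "y < real K * h" using reals_Archimedean3[OF h] by blast
    have "eventually (\<lambda>k. u k \<omega> = U \<omega> (disc h T \<omega>)) sequentially"
      unfolding eventually_sequentially
    proof (intro exI[of _ K] allI impI)
      fix k assume "K \<le> k"
      then have "real K * h \<le> real k * h" using h by (simp add: mult_right_mono)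
      then have "ennreal y \<le> ennreal (real k * h)" using K by (intro ennreal_leI) simp
      then show "u k \<omega> = U \<omega> (disc h T \<omega>)" by (simp add: u_def dy min_def)
    qed
    then have "(\<lambda>k. u k \<omega>) \<longlonglongrightarrow> U \<omega> (disc h T \<omega>)" by (rule tendsto_eventually)
    then have "liminf (\<lambda>k. u k \<omega>) = U \<omega> (disc h T \<omega>)" by (intro lim_imp_Liminf) simp
    then show ?thesis by simp
  qed
  have "(\<integral>\<^sup>+\<omega>. U \<omega> (disc h T \<omega>) \<partial>P) \<le> (\<integral>\<^sup>+\<omega>. liminf (\<lambda>k. u k \<omega>) \<partial>P)"
    by (intro nn_integral_mono pw)
  also have "\<dots> \<le> liminf (\<lambda>k. \<integral>\<^sup>+\<omega>. u k \<omega> \<partial>P)" by (rule nn_integral_liminf[OF um])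
  also have "\<dots> \<le> 1" by (rule liminf_le_const) (simp add: u_def stepA[OF T h])
  finally show ?thesis .
qed

lemma U_bound:
  assumes T: "stopping_time (aug_filt M B) T"
  shows "(\<integral>\<^sup>+\<omega>. U \<omega> (T \<omega>) \<partial>P) \<le> 1"
proof -
  have Tm[measurable]: "T \<in> borel_measurable P" by (rule T_meas[OF T])
  define h where "h n = 1 / real (Suc n)" for n
  have h0: "0 < h n" for n by (simp add: h_def)
  define v where "v n \<omega> = U \<omega> (disc (h n) T \<omega>)" for n \<omega>
  have vm: "v n \<in> borel_measurable P" for n unfolding v_def by (intro U_meas disc_meas Tm)
  have pw: "U \<omega> (T \<omega>) \<le> liminf (\<lambda>n. v n \<omega>)" if \<omega>: "\<omega> \<in> space P" for \<omega>
  proof (cases "T \<omega> = \<infinity>")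
    case True
    then have "v n \<omega> = U \<omega> (T \<omega>)" for n by (simp add: v_def disc_def)
    then show ?thesis by (simp add: Liminf_const)
  next
    case False
    have \<omega>M: "\<omega> \<in> space M" using \<omega> by simp
    define x where "x = enn2real (T \<omega>)"
    have Tx: "T \<omega> = ennreal x" using False by (simp add: x_def ennreal_enn2real_if)
    have x0: "0 \<le> x" by (simp add: x_def)
    define y where "y n = h n * real_of_int \<lceil>x / h n\<rceil>" for n
    have dy: "disc (h n) T \<omega> = ennreal (y n)" for n using disc_fin(1)[of "h n" T \<omega>, OF h0 False] by (simp add: y_def x_def)
    have yx: "x \<le> y n" for n using disc_fin(2)[of "h n" T \<omega>, OF h0 False] by (simp add: y_def x_def)
    have yu: "y n < x + h n" for n using disc_fin(3)[of "h n" T \<omega>, OF h0 False] by (simp add: y_def x_def)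
    have y0: "0 \<le> y n" for n using x0 yx[of n] by simp
    have ylim: "y \<longlonglongrightarrow> x"
    proof (rule real_tendsto_sandwich[where f="\<lambda>n. x" and h="\<lambda>n. x + h n"])
      show "\<forall>\<^sub>F n in sequentially. x \<le> y n" using yx by simp
      show "\<forall>\<^sub>F n in sequentially. y n \<le> x + h n" using yu by (simp add: less_imp_le)
      have "h \<longlonglongrightarrow> 0" unfolding h_def using LIMSEQ_inverse_real_of_nat by (simp add: inverse_eq_divide)
      then show "(\<lambda>n. x + h n) \<longlonglongrightarrow> x" using tendsto_add[OF tendsto_const[of x]] by fastforce
    qed simp
    have zlim: "(\<lambda>n. Z (y n) \<omega>) \<longlonglongrightarrow> Z x \<omega>"
      by (rule continuous_on_tendsto_compose[OF Z_cont[OF \<omega>M] ylim]) (use x0 y0 in auto)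
    define c where "c = ennreal (- \<gamma>) * Iz \<omega> (T \<omega>)"
    have wlim: "(\<lambda>n. c + ennreal (Z (y n) \<omega>)) \<longlonglongrightarrow> c + ennreal (Z x \<omega>)"
      by (intro tendsto_add tendsto_const tendsto_ennrealI zlim)
    have "U \<omega> (T \<omega>) = c + ennreal (Z x \<omega>)" using x0 by (simp add: c_def Tx U_real)
    also have "\<dots> = liminf (\<lambda>n. c + ennreal (Z (y n) \<omega>))"
      by (rule lim_imp_Liminf[symmetric, OF _ wlim]) simp
    also have "\<dots> \<le> liminf (\<lambda>n. v n \<omega>)"
    proof (intro Liminf_mono always_eventually allI)
      fix n
      have "Iz \<omega> (T \<omega>) \<le> Iz \<omega> (ennreal (y n))" using yx[of n] by (intro Iz_mono) (simp add: Tx ennreal_leI)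
      then have "c \<le> ennreal (- \<gamma>) * Iz \<omega> (ennreal (y n))" unfolding c_def by (rule mult_left_mono) simp
      then show "c + ennreal (Z (y n) \<omega>) \<le> v n \<omega>"
        unfolding v_def dy U_real[OF y0] by (rule add_right_mono)
    qed
    finally show ?thesis .
  qed
  have "(\<integral>\<^sup>+\<omega>. U \<omega> (T \<omega>) \<partial>P) \<le> (\<integral>\<^sup>+\<omega>. liminf (\<lambda>n. v n \<omega>) \<partial>P)"
    by (intro nn_integral_mono pw)
  also have "\<dots> \<le> liminf (\<lambda>n. \<integral>\<^sup>+\<omega>. v n \<omega> \<partial>P)" by (rule nn_integral_liminf[OF vm])
  also have "\<dots> \<le> 1" by (rule liminf_le_const) (simp add: v_def stepB[OF T h0])
  finally show ?thesis .
qed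

end

lemma ennreal_integral_le_nn:
  fixes f :: "'b \<Rightarrow> real"
  assumes "\<And>t. 0 \<le> f t"
  shows "ennreal (integral\<^sup>L N f) \<le> (\<integral>\<^sup>+t. ennreal (f t) \<partial>N)"
proof (cases "(\<integral>\<^sup>+t. ennreal (f t) \<partial>N) = \<infinity>")
  case True then show ?thesis by simp
next
  case False
  define r where "r = enn2real (\<integral>\<^sup>+t. ennreal (f t) \<partial>N)"
  have r: "(\<integral>\<^sup>+t. ennreal (f t) \<partial>N) = ennreal r" using False by (simp add: r_def ennreal_enn2real_if)
  have "0 \<le> r" by (simp add: r_def)
  have "integral\<^sup>L N f \<le> r" by (rule integral_real_bounded[OF \<open>0 \<le> r\<close>]) (simp add: r)
  then show ?thesis unfolding r by (rule ennreal_leI)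
qed

context bmz begin

lemma GZ:
  assumes gam: "\<gamma> = \<theta> - \<alpha> - \<rho> - \<mu>" and t: "0 \<le> t"
  shows "exp (- (\<rho> + \<mu>) * t) * GBM x \<theta> \<alpha> \<sigma> B t \<omega> = x * Z t \<omega>"
proof -
  have "- (\<rho> + \<mu>) * t + ((\<theta> - \<alpha> - \<sigma>\<^sup>2 / 2) * t + \<sigma> * B t \<omega>) = \<gamma> * t + \<sigma> * B (max 0 t) \<omega> - \<sigma>^2 / 2 * t"
    using t by (simp add: gam algebra_simps)
  then show ?thesis unfolding GBM_def Z_def by (simp add: exp_add[symmetric] mult.left_commute)
qed

lemma reward_upper:
  assumes gam: "\<gamma> = \<theta> - \<alpha> - \<rho> - \<mu>" and x: "0 < x" and a0: "0 \<le> \<alpha> + \<nu> * \<mu>" and fh: "0 < fh"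
    and r0: "0 \<le> \<rho> + \<mu>" and T: "stopping_time (aug_filt M B) T"
  shows "reward M B x \<theta> \<alpha> \<sigma> \<rho> \<nu> K fh \<mu> T \<le> max fh ((\<alpha> + \<nu> * \<mu>) / (- \<gamma>)) * x + fh * \<bar>K\<bar>"
proof -
  define a where "a = \<alpha> + \<nu> * \<mu>"
  define c where "c = max fh (a / (- \<gamma>))"
  have c0: "0 \<le> c" using fh by (simp add: c_def)
  have ac: "a \<le> c * (- \<gamma>)"
  proof -
    have "a / (- \<gamma>) \<le> c" by (simp add: c_def)
    moreover have "0 < - \<gamma>" using gneg by simp
    ultimately show ?thesis using pos_divide_le_eq[of "- \<gamma>" a c] by simp
  qed
  have Tm[measurable]: "T \<in> borel_measurable P" by (rule T_meas[OF T])
  define L where "L \<omega> = (LINT t:{t. 0 \<le> t \<and> ennreal t \<le> T \<omega>}|lborel. exp (- (\<rho> + \<mu>) * t) * (\<alpha> + \<nu> * \<mu>) * GBM x \<theta> \<alpha> \<sigma> B t \<omega>)" for \<omega>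
  define R where "R \<omega> = (if T \<omega> = \<infinity> then 0
              else exp (- (\<rho> + \<mu>) * enn2real (T \<omega>)) * fh * (GBM x \<theta> \<alpha> \<sigma> B (enn2real (T \<omega>)) \<omega> - K))" for \<omega>
  have rew: "reward M B x \<theta> \<alpha> \<sigma> \<rho> \<nu> K fh \<mu> T = (\<integral>\<omega>. L \<omega> + R \<omega> \<partial>P)"
    by (simp add: reward_def L_def R_def)
  have pw: "ennreal (L \<omega> + R \<omega>) \<le> ennreal (c * x) * U \<omega> (T \<omega>) + ennreal (fh * \<bar>K\<bar>)" if \<omega>: "\<omega> \<in> space P" for \<omega>
  proof -
    have \<omega>M: "\<omega> \<in> space M" using \<omega> by simp
    have [measurable]: "(\<lambda>t. Z t \<omega>) \<in> borel_measurable borel" using Z_t_meas[OF \<omega>M] by simp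
    have Sm[measurable]: "Sset s \<in> sets borel" for s
    proof -
      have "Sset s = {t \<in> space borel. 0 \<le> t \<and> ennreal t \<le> s}" by (auto simp: Sset_def)
      also have "\<dots> \<in> sets borel" by measurable
      finally show ?thesis .
    qed
    have g: "indicator (Sset (T \<omega>)) t *\<^sub>R (exp (- (\<rho> + \<mu>) * t) * (\<alpha> + \<nu> * \<mu>) * GBM x \<theta> \<alpha> \<sigma> B t \<omega>)
         = a * x * (indicator (Sset (T \<omega>)) t * Z t \<omega>)" for t
    proof (cases "t \<in> Sset (T \<omega>)")
      case True then have "0 \<le> t" by (simp add: Sset_def)
      then show ?thesis using True GZ[OF gam, of t x \<omega>] by (simp add: a_def mult_ac)
    qed simp
    have L0: "0 \<le> L \<omega>" unfolding L_def set_lebesgue_integral_def Sset_def[symmetric] g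
      by (rule Bochner_Integration.integral_nonneg) (use a0 x Z_pos in \<open>simp add: a_def less_imp_le\<close>)
    have "ennreal (L \<omega>) \<le> (\<integral>\<^sup>+t. ennreal (a * x * (indicator (Sset (T \<omega>)) t * Z t \<omega>)) \<partial>lborel)"
      unfolding L_def set_lebesgue_integral_def Sset_def[symmetric] g
      by (rule ennreal_integral_le_nn) (use a0 x Z_pos in \<open>simp add: a_def less_imp_le\<close>)
    also have "\<dots> = (\<integral>\<^sup>+t. ennreal (a * x) * (indicator (Sset (T \<omega>)) t * ennreal (Z t \<omega>)) \<partial>lborel)"
      using a0 x Z_pos by (intro nn_integral_cong) (simp add: a_def ennreal_mult indicator_def less_imp_le)
    also have "\<dots> = ennreal (a * x) * Iz \<omega> (T \<omega>)"
      unfolding Iz_def by (intro nn_integral_cmult) measurable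
    finally have Lb: "ennreal (L \<omega>) \<le> ennreal (a * x) * Iz \<omega> (T \<omega>)" .
    define Y where "Y = (if T \<omega> = \<infinity> then 0 else fh * x * Z (enn2real (T \<omega>)) \<omega>)"
    have Y0: "0 \<le> Y" using fh x Z_pos by (simp add: Y_def less_imp_le)
    have Rb: "R \<omega> \<le> Y + fh * \<bar>K\<bar>"
    proof (cases "T \<omega> = \<infinity>")
      case True then show ?thesis using fh by (simp add: R_def Y_def)
    next
      case False
      define s where "s = enn2real (T \<omega>)"
      have s0: "0 \<le> s" by (simp add: s_def)
      have "0 \<le> (\<rho> + \<mu>) * s" using r0 s0 by simp
      then have "- (\<rho> + \<mu>) * s \<le> 0" by linarith
      then have e1: "exp (- (\<rho> + \<mu>) * s) \<le> 1" by (simp del: mult_minus_left)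
      have e0: "0 < exp (- (\<rho> + \<mu>) * s)" by simp
      have "R \<omega> = fh * (exp (- (\<rho> + \<mu>) * s) * GBM x \<theta> \<alpha> \<sigma> B s \<omega>) - fh * (K * exp (- (\<rho> + \<mu>) * s))"
        using False by (simp add: R_def s_def algebra_simps)
      also have "\<dots> = fh * x * Z s \<omega> - fh * (K * exp (- (\<rho> + \<mu>) * s))" using GZ[OF gam s0] by simp
      also have "- (K * exp (- (\<rho> + \<mu>) * s)) \<le> \<bar>K\<bar>"
      proof -
        have "\<bar>K * exp (- (\<rho> + \<mu>) * s)\<bar> \<le> \<bar>K\<bar>" using e1 e0 by (simp add: abs_mult mult_left_le)
        then show ?thesis by linarith
      qed
      then have "fh * (- (K * exp (- (\<rho> + \<mu>) * s))) \<le> fh * \<bar>K\<bar>" using fh by (intro mult_left_mono) auto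
      then have "- (fh * (K * exp (- (\<rho> + \<mu>) * s))) \<le> fh * \<bar>K\<bar>" by simp
      then have "fh * x * Z s \<omega> - fh * (K * exp (- (\<rho> + \<mu>) * s)) \<le> fh * x * Z s \<omega> + fh * \<bar>K\<bar>"
        by linarith
      finally show ?thesis using False by (simp add: Y_def s_def)
    qed
    have "ennreal (L \<omega> + R \<omega>) \<le> ennreal (L \<omega> + Y + fh * \<bar>K\<bar>)" using Rb by (intro ennreal_leI) simp
    also have "\<dots> = ennreal (L \<omega>) + ennreal Y + ennreal (fh * \<bar>K\<bar>)"
      using L0 Y0 fh by (simp add: ennreal_plus)
    also have "\<dots> \<le> ennreal (c * x) * U \<omega> (T \<omega>) + ennreal (fh * \<bar>K\<bar>)"
    proof (rule add_right_mono)
      have "ennreal (a * x) \<le> ennreal (c * x) * ennreal (- \<gamma>)"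
      proof -
        have "a * x \<le> (c * (- \<gamma>)) * x" using ac x by (intro mult_right_mono) auto
        then have "a * x \<le> c * x * (- \<gamma>)" by (simp only: mult_ac)
        then have "ennreal (a * x) \<le> ennreal (c * x * (- \<gamma>))" by (rule ennreal_leI)
        also have "\<dots> = ennreal (c * x) * ennreal (- \<gamma>)" using c0 x gneg by (intro ennreal_mult) auto
        finally show ?thesis .
      qed
      then have 1: "ennreal (L \<omega>) \<le> ennreal (c * x) * (ennreal (- \<gamma>) * Iz \<omega> (T \<omega>))"
      proof -
        have "ennreal (a * x) * Iz \<omega> (T \<omega>) \<le> (ennreal (c * x) * ennreal (- \<gamma>)) * Iz \<omega> (T \<omega>)"
          using \<open>ennreal (a * x) \<le> ennreal (c * x) * ennreal (- \<gamma>)\<close> by (rule mult_right_mono) simp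
        with Lb show ?thesis by (simp add: mult.assoc)
      qed
      have 2: "ennreal Y \<le> ennreal (c * x) * (if T \<omega> = \<infinity> then 0 else ennreal (Z (enn2real (T \<omega>)) \<omega>))"
      proof (cases "T \<omega> = \<infinity>")
        case False
        have "fh * x * Z (enn2real (T \<omega>)) \<omega> \<le> c * x * Z (enn2real (T \<omega>)) \<omega>"
          using x Z_pos by (intro mult_right_mono) (auto simp: c_def less_imp_le)
        then show ?thesis using False c0 x Z_pos
          by (simp add: Y_def ennreal_mult[symmetric] less_imp_le ennreal_leI)
      qed (simp add: Y_def)
      show "ennreal (L \<omega>) + ennreal Y \<le> ennreal (c * x) * U \<omega> (T \<omega>)"
        unfolding U_def distrib_left by (rule add_mono[OF 1 2])
    qed
    finally show ?thesis .
  qed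
  have "(\<integral>\<^sup>+\<omega>. ennreal (L \<omega> + R \<omega>) \<partial>P) \<le> (\<integral>\<^sup>+\<omega>. ennreal (c * x) * U \<omega> (T \<omega>) + ennreal (fh * \<bar>K\<bar>) \<partial>P)"
    by (intro nn_integral_mono pw)
  also have "\<dots> = ennreal (c * x) * (\<integral>\<^sup>+\<omega>. U \<omega> (T \<omega>) \<partial>P) + ennreal (fh * \<bar>K\<bar>) * emeasure P (space P)"
    using U_meas[OF Tm] by (simp add: nn_integral_add nn_integral_cmult)
  also have "\<dots> \<le> ennreal (c * x) * 1 + ennreal (fh * \<bar>K\<bar>) * 1"
    using U_bound[OF T] prob_space.emeasure_space_1[OF prob_P] by (intro add_mono mult_left_mono) auto
  also have "\<dots> = ennreal (c * x + fh * \<bar>K\<bar>)" using c0 x fh by (simp add: ennreal_plus)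
  finally have "(\<integral>\<omega>. L \<omega> + R \<omega> \<partial>P) \<le> c * x + fh * \<bar>K\<bar>"
    using c0 x fh by (intro integral_real_bounded) auto
  then show ?thesis by (simp add: rew c_def a_def)
qed

end

context bmz begin

lemma int_exp_pos: "(\<integral>\<^sup>+t. indicator {0..} t * ennreal (exp (\<gamma> * t)) \<partial>lborel) = ennreal (1 / (- \<gamma>))"
proof -
  define l where "l = - \<gamma>"
  have l: "0 < l" using gneg by (simp add: l_def)
  interpret E: prob_space "density lborel (exponential_density l)" by (rule prob_space_exponential_density[OF l])
  have "1 = emeasure (density lborel (\<lambda>t. ennreal (exponential_density l t))) (space lborel)"
    using E.emeasure_space_1 by simp
  also have "\<dots> = (\<integral>\<^sup>+t. ennreal (exponential_density l t) * indicator (space lborel) t \<partial>lborel)"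
    by (rule emeasure_density) simp_all
  also have "\<dots> = (\<integral>\<^sup>+t. ennreal l * (indicator {0..} t * ennreal (exp (\<gamma> * t))) \<partial>lborel)"
  proof (intro nn_integral_cong)
    fix t :: real
    show "ennreal (exponential_density l t) * indicator (space lborel) t = ennreal l * (indicator {0..} t * ennreal (exp (\<gamma> * t)))"
    proof (cases "t < 0")
      case False
      have "exponential_density l t = l * exp (\<gamma> * t)" using False by (simp add: exponential_density_def l_def mult.commute)
      then show ?thesis using False l by (simp add: ennreal_mult)
    qed (simp add: exponential_density_def)
  qed
  also have "\<dots> = ennreal l * (\<integral>\<^sup>+t. indicator {0..} t * ennreal (exp (\<gamma> * t)) \<partial>lborel)"
    by (rule nn_integral_cmult) measurable
  finally have eq: "ennreal l * (\<integral>\<^sup>+t. indicator {0..} t * ennreal (exp (\<gamma> * t)) \<partial>lborel) = 1" by simp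
  have "(\<integral>\<^sup>+t. indicator {0..} t * ennreal (exp (\<gamma> * t)) \<partial>lborel)
      = ennreal (1 / l) * (ennreal l * (\<integral>\<^sup>+t. indicator {0..} t * ennreal (exp (\<gamma> * t)) \<partial>lborel))"
    using l by (simp add: mult.assoc[symmetric] ennreal_mult[symmetric])
  also have "\<dots> = ennreal (1 / l)" unfolding eq by simp
  finally show ?thesis by (simp add: l_def)
qed

lemma EIz: "(\<integral>\<^sup>+\<omega>. Iz \<omega> \<infinity> \<partial>P) = ennreal (1 / (- \<gamma>))"
proof -
  have Sinf: "Sset \<infinity> = {0..}" by (auto simp: Sset_def)
  have jf: "(\<lambda>(\<omega>,t). indicator {0..} t * ennreal (Z t \<omega>)) \<in> borel_measurable (P \<Otimes>\<^sub>M lborel)"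
  proof -
    have "(\<lambda>p. indicator {0..} (snd p) * ennreal (Z (snd p) (fst p))) \<in> borel_measurable (P \<Otimes>\<^sub>M lborel)"
      by measurable
    then show ?thesis by (simp add: case_prod_beta)
  qed
  have "(\<integral>\<^sup>+\<omega>. Iz \<omega> \<infinity> \<partial>P) = (\<integral>\<^sup>+\<omega>. (\<integral>\<^sup>+t. indicator {0..} t * ennreal (Z t \<omega>) \<partial>lborel) \<partial>P)"
    by (simp only: Iz_def Sinf)
  also have "\<dots> = (\<integral>\<^sup>+t. (\<integral>\<^sup>+\<omega>. indicator {0..} t * ennreal (Z t \<omega>) \<partial>P) \<partial>lborel)"
    using pair_sigma_finite.Fubini'[OF pair_PL jf] by simp
  also have "\<dots> = (\<integral>\<^sup>+t. indicator {0..} t * ennreal (exp (\<gamma> * t)) \<partial>lborel)"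
  proof (intro nn_integral_cong)
    fix t :: real
    show "(\<integral>\<^sup>+\<omega>. indicator {0..} t * ennreal (Z t \<omega>) \<partial>P) = indicator {0..} t * ennreal (exp (\<gamma> * t))"
    proof (cases "0 \<le> t")
      case True then show ?thesis using EZ[OF True] by simp
    qed simp
  qed
  also have "\<dots> = ennreal (1 / (- \<gamma>))" by (rule int_exp_pos)
  finally show ?thesis .
qed

lemma reward_inf:
  assumes gam: "\<gamma> = \<theta> - \<alpha> - \<rho> - \<mu>" and x: "0 < x" and a0: "0 \<le> \<alpha> + \<nu> * \<mu>"
  shows "reward M B x \<theta> \<alpha> \<sigma> \<rho> \<nu> K fh \<mu> (\<lambda>\<omega>. \<infinity>) = (\<alpha> + \<nu> * \<mu>) / (- \<gamma>) * x"
proof -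
  define a where "a = \<alpha> + \<nu> * \<mu>"
  have ax: "0 \<le> a * x" using a0 x by (simp add: a_def)
  have Sinf: "{t. 0 \<le> t \<and> ennreal t \<le> \<infinity>} = Sset \<infinity>" by (auto simp: Sset_def)
  have pw: "(LINT t:{t. 0 \<le> t \<and> ennreal t \<le> \<infinity>}|lborel. exp (- (\<rho> + \<mu>) * t) * (\<alpha> + \<nu> * \<mu>) * GBM x \<theta> \<alpha> \<sigma> B t \<omega>)
     + (if (\<infinity>::ennreal) = \<infinity> then 0 else exp (- (\<rho> + \<mu>) * enn2real (\<infinity>::ennreal)) * fh * (GBM x \<theta> \<alpha> \<sigma> B (enn2real (\<infinity>::ennreal)) \<omega> - K))
     = enn2real (ennreal (a * x) * Iz \<omega> \<infinity>)" if \<omega>: "\<omega> \<in> space P" for \<omega>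
  proof -
    have \<omega>M: "\<omega> \<in> space M" using \<omega> by simp
    have [measurable]: "(\<lambda>t. Z t \<omega>) \<in> borel_measurable borel" using Z_t_meas[OF \<omega>M] by simp
    have Sm[measurable]: "Sset \<infinity> \<in> sets borel" by (simp add: Sset_def)
    have g: "indicator (Sset \<infinity>) t *\<^sub>R (exp (- (\<rho> + \<mu>) * t) * (\<alpha> + \<nu> * \<mu>) * GBM x \<theta> \<alpha> \<sigma> B t \<omega>)
         = a * x * (indicator (Sset \<infinity>) t * Z t \<omega>)" for t
    proof (cases "t \<in> Sset \<infinity>")
      case True then have "0 \<le> t" by (simp add: Sset_def)
      then show ?thesis using True GZ[OF gam, of t x \<omega>] by (simp add: a_def mult_ac)
    qed simp
    have "(LINT t:{t. 0 \<le> t \<and> ennreal t \<le> \<infinity>}|lborel. exp (- (\<rho> + \<mu>) * t) * (\<alpha> + \<nu> * \<mu>) * GBM x \<theta> \<alpha> \<sigma> B t \<omega>)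
        = (\<integral>t. a * x * (indicator (Sset \<infinity>) t * Z t \<omega>) \<partial>lborel)"
      unfolding set_lebesgue_integral_def Sinf g ..
    also have "\<dots> = enn2real (\<integral>\<^sup>+t. ennreal (a * x * (indicator (Sset \<infinity>) t * Z t \<omega>)) \<partial>lborel)"
    proof (rule integral_eq_nn_integral)
      have "(\<lambda>t. a * x * (indicator (Sset \<infinity>) t * Z t \<omega>)) \<in> borel_measurable borel" by measurable
      then show "(\<lambda>t. a * x * (indicator (Sset \<infinity>) t * Z t \<omega>)) \<in> borel_measurable lborel" by simp
      show "AE t in lborel. 0 \<le> a * x * (indicator (Sset \<infinity>) t * Z t \<omega>)"
        using ax Z_pos by (auto intro!: mult_nonneg_nonneg simp: less_imp_le)
    qed
    also have "(\<integral>\<^sup>+t. ennreal (a * x * (indicator (Sset \<infinity>) t * Z t \<omega>)) \<partial>lborel)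
        = (\<integral>\<^sup>+t. ennreal (a * x) * (indicator (Sset \<infinity>) t * ennreal (Z t \<omega>)) \<partial>lborel)"
      using ax Z_pos by (intro nn_integral_cong) (simp add: ennreal_mult indicator_def less_imp_le)
    also have "\<dots> = ennreal (a * x) * Iz \<omega> \<infinity>"
      unfolding Iz_def by (intro nn_integral_cmult) measurable
    finally show ?thesis by simp
  qed
  have rew: "reward M B x \<theta> \<alpha> \<sigma> \<rho> \<nu> K fh \<mu> (\<lambda>\<omega>. \<infinity>) = (\<integral>\<omega>. enn2real (ennreal (a * x) * Iz \<omega> \<infinity>) \<partial>P)"
    unfolding reward_def by (rule Bochner_Integration.integral_cong[OF refl pw]) simp
  have Gm[measurable]: "(\<lambda>\<omega>. Iz \<omega> \<infinity>) \<in> borel_measurable P" using Iz_meas[of "\<lambda>_. \<infinity>"] by simp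
  have fin: "AE \<omega> in P. Iz \<omega> \<infinity> \<noteq> \<infinity>"
    by (rule nn_integral_PInf_AE[OF Gm]) (simp only: EIz, simp)
  have "(\<integral>\<omega>. enn2real (ennreal (a * x) * Iz \<omega> \<infinity>) \<partial>P)
     = enn2real (\<integral>\<^sup>+\<omega>. ennreal (enn2real (ennreal (a * x) * Iz \<omega> \<infinity>)) \<partial>P)"
  proof (rule integral_eq_nn_integral)
    show "(\<lambda>\<omega>. enn2real (ennreal (a * x) * Iz \<omega> \<infinity>)) \<in> borel_measurable P" using Gm by measurable
  qed simp
  also have "(\<integral>\<^sup>+\<omega>. ennreal (enn2real (ennreal (a * x) * Iz \<omega> \<infinity>)) \<partial>P) = (\<integral>\<^sup>+\<omega>. ennreal (a * x) * Iz \<omega> \<infinity> \<partial>P)"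
  proof (rule nn_integral_cong_AE)
    show "AE \<omega> in P. ennreal (enn2real (ennreal (a * x) * Iz \<omega> \<infinity>)) = ennreal (a * x) * Iz \<omega> \<infinity>"
      using fin
    proof eventually_elim
      case (elim \<omega>)
      then have "ennreal (a * x) * Iz \<omega> \<infinity> \<noteq> \<infinity>" by (simp add: ennreal_mult_eq_top_iff)
      then show ?case by (simp add: ennreal_enn2real_if)
    qed
  qed
  also have "\<dots> = ennreal (a * x) * ennreal (1 / (- \<gamma>))" by (subst nn_integral_cmult[OF Gm]) (simp only: EIz)
  also have "\<dots> = ennreal (a * x * (1 / (- \<gamma>)))" using ax gneg by (intro ennreal_mult[symmetric]) auto
  also have "enn2real (ennreal (a * x * (1 / (- \<gamma>)))) = a * x * (1 / (- \<gamma>))"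
    by (rule enn2real_ennreal) (use ax gneg in \<open>simp add: divide_nonneg_neg\<close>)
  also have "\<dots> = (\<alpha> + \<nu> * \<mu>) / (- \<gamma>) * x" by (simp add: a_def)
  finally show ?thesis unfolding rew .
qed

lemma reward_zero: "reward M B x \<theta> \<alpha> \<sigma> \<rho> \<nu> K fh \<mu> (\<lambda>\<omega>. 0) = fh * (x - K)"
proof -
  have pw: "(LINT t:{t. 0 \<le> t \<and> ennreal t \<le> 0}|lborel. exp (- (\<rho> + \<mu>) * t) * (\<alpha> + \<nu> * \<mu>) * GBM x \<theta> \<alpha> \<sigma> B t \<omega>)
     + (if (0::ennreal) = \<infinity> then 0 else exp (- (\<rho> + \<mu>) * enn2real (0::ennreal)) * fh * (GBM x \<theta> \<alpha> \<sigma> B (enn2real (0::ennreal)) \<omega> - K))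
     = fh * (x - K)" if \<omega>: "\<omega> \<in> space P" for \<omega>
  proof -
    have \<omega>M: "\<omega> \<in> space M" using \<omega> by simp
    have "(LINT t:{t. 0 \<le> t \<and> ennreal t \<le> 0}|lborel. exp (- (\<rho> + \<mu>) * t) * (\<alpha> + \<nu> * \<mu>) * GBM x \<theta> \<alpha> \<sigma> B t \<omega>) = 0"
      unfolding set_lebesgue_integral_def
    proof (rule integral_eq_zero_AE)
      show "AE t in lborel. indicator {t. 0 \<le> t \<and> ennreal t \<le> 0} t *\<^sub>R (exp (- (\<rho> + \<mu>) * t) * (\<alpha> + \<nu> * \<mu>) * GBM x \<theta> \<alpha> \<sigma> B t \<omega>) = 0"
        using AE_lborel_singleton[of 0] by eventually_elim (auto simp: indicator_def)
    qed
    moreover have "GBM x \<theta> \<alpha> \<sigma> B 0 \<omega> = x" using B0[OF \<omega>M] by (simp add: GBM_def)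
    ultimately show ?thesis by simp
  qed
  have "reward M B x \<theta> \<alpha> \<sigma> \<rho> \<nu> K fh \<mu> (\<lambda>\<omega>. 0) = (\<integral>\<omega>. fh * (x - K) \<partial>P)"
    unfolding reward_def by (rule Bochner_Integration.integral_cong[OF refl pw]) simp
  also have "\<dots> = fh * (x - K)" using prob_space.prob_space[OF prob_P] by simp
  finally show ?thesis .
qed

end

theorem proposition4p4:
  fixes M :: "'a measure" and B :: "real \<Rightarrow> 'a \<Rightarrow> real"
    and \<theta> \<alpha> \<sigma> \<rho> \<nu> K \<rho>h \<mu>m \<mu>M \<mu>h \<mu> :: real
  assumes BM: "std_BM M B"
    and "\<theta> > 0" and "\<alpha> \<ge> 0" and "\<sigma> > 0" and "\<rho> > 0" and "0 \<le> \<nu>" and "\<nu> \<le> 1"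
    and "\<rho>h > 0" and "0 < \<mu>m" and "\<mu>m \<le> \<mu>M"
    and "\<mu>m \<le> \<mu>h" and "\<mu>h \<le> \<mu>M"
    and "\<theta> - \<alpha> - \<rho> - \<mu>m < 0"
    and "\<mu>m \<le> \<mu>" and "\<mu> \<le> \<mu>M"
  shows "((\<lambda>x. VN M B x \<theta> \<alpha> \<sigma> \<rho> \<nu> K ((\<rho>h + \<mu>h) / (\<rho> + \<mu>)) \<mu> / x)
           \<longlongrightarrow> max ((\<rho>h + \<mu>h) / (\<rho> + \<mu>)) ((\<alpha> + \<nu> * \<mu>) / (\<rho> + \<mu> + \<alpha> - \<theta>))) at_top"
proof -
  define \<gamma> where "\<gamma> = \<theta> - \<alpha> - \<rho> - \<mu>"
  have gneg: "\<gamma> < 0" using assms(13,14) by (simp add: \<gamma>_def)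
  have pM: "prob_space M" using BM by (simp add: std_BM_def)
  interpret Bz: bmz M B \<gamma> \<sigma>
    by (rule bmz.intro[OF bm.intro[OF pM bm_axioms.intro[OF BM]] bmz_axioms.intro[OF gneg]])
  define fh where "fh = (\<rho>h + \<mu>h) / (\<rho> + \<mu>)"
  define \<beta> where "\<beta> = (\<alpha> + \<nu> * \<mu>) / (\<rho> + \<mu> + \<alpha> - \<theta>)"
  define c where "c = max fh \<beta>"
  have mu0: "0 < \<mu>" using assms(9,14) by simp
  have fh0: "0 < fh" unfolding fh_def using assms(5,8,9,11) mu0 by (intro divide_pos_pos) auto
  have a0: "0 \<le> \<alpha> + \<nu> * \<mu>" using assms(3,6) mu0 by simp
  have r0: "0 \<le> \<rho> + \<mu>" using assms(5) mu0 by simp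
  have beq: "(\<alpha> + \<nu> * \<mu>) / (- \<gamma>) = \<beta>" by (simp add: \<beta>_def \<gamma>_def)
  define V where "V x = VN M B x \<theta> \<alpha> \<sigma> \<rho> \<nu> K fh \<mu>" for x
  define R where "R x \<tau> = reward M B x \<theta> \<alpha> \<sigma> \<rho> \<nu> K fh \<mu> \<tau>" for x \<tau>
  have V_eq: "V x = (SUP \<tau>\<in>{\<tau>. stopping_time (aug_filt M B) \<tau>}. R x \<tau>)" for x
    by (simp add: V_def R_def VN_def)
  have ST0: "(\<lambda>\<omega>. 0) \<in> {\<tau>. stopping_time (aug_filt M B) \<tau>}" by (simp add: stopping_time_const)
  have STi: "(\<lambda>\<omega>. \<infinity>) \<in> {\<tau>. stopping_time (aug_filt M B) \<tau>}" by (simp add: stopping_time_const)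
  have ub: "R x \<tau> \<le> c * x + fh * \<bar>K\<bar>" if "0 < x" "\<tau> \<in> {\<tau>. stopping_time (aug_filt M B) \<tau>}" for x \<tau>
  proof -
    have "stopping_time (aug_filt M B) \<tau>" using that(2) by simp
    from Bz.reward_upper[OF \<gamma>_def that(1) a0 fh0 r0 this, unfolded beq] show ?thesis by (simp add: R_def c_def)
  qed
  have Vup: "V x \<le> c * x + fh * \<bar>K\<bar>" if "0 < x" for x
    unfolding V_eq by (rule cSUP_least) (use ST0 ub[OF that] in auto)
  have bdd: "bdd_above (R x ` {\<tau>. stopping_time (aug_filt M B) \<tau>})" if "0 < x" for x
    by (rule bdd_aboveI2) (rule ub[OF that])
  have Vlo1: "\<beta> * x \<le> V x" if "0 < x" for x
  proof -
    have "R x (\<lambda>\<omega>. \<infinity>) = \<beta> * x" using Bz.reward_inf[OF \<gamma>_def that a0, unfolded beq] by (simp add: R_def)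
    moreover have "R x (\<lambda>\<omega>. \<infinity>) \<le> V x" unfolding V_eq by (rule cSUP_upper[OF STi bdd[OF that]])
    ultimately show ?thesis by simp
  qed
  have Vlo2: "fh * (x - K) \<le> V x" if "0 < x" for x
  proof -
    have "R x (\<lambda>\<omega>. 0) = fh * (x - K)" using Bz.reward_zero by (simp add: R_def)
    moreover have "R x (\<lambda>\<omega>. 0) \<le> V x" unfolding V_eq by (rule cSUP_upper[OF ST0 bdd[OF that]])
    ultimately show ?thesis by simp
  qed
  have "((\<lambda>x. V x / x) \<longlongrightarrow> c) at_top"
  proof (rule real_tendsto_sandwich[where f="\<lambda>x. max \<beta> (fh - fh * K / x)" and h="\<lambda>x. c + fh * \<bar>K\<bar> / x"])
    show "eventually (\<lambda>x. max \<beta> (fh - fh * K / x) \<le> V x / x) at_top"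
      using eventually_gt_at_top[of 0]
    proof eventually_elim
      case (elim x)
      have "\<beta> \<le> V x / x" using Vlo1[OF elim] elim by (simp add: pos_le_divide_eq)
      moreover have "fh - fh * K / x \<le> V x / x"
      proof -
        have "fh - fh * K / x = fh * (x - K) / x" using elim by (simp add: field_simps)
        also have "\<dots> \<le> V x / x" using Vlo2[OF elim] elim by (simp add: divide_right_mono)
        finally show ?thesis .
      qed
      ultimately show ?case by simp
    qed
    show "eventually (\<lambda>x. V x / x \<le> c + fh * \<bar>K\<bar> / x) at_top"
      using eventually_gt_at_top[of 0]
    proof eventually_elim
      case (elim x)
      have "V x / x \<le> (c * x + fh * \<bar>K\<bar>) / x" using Vup[OF elim] elim by (simp add: divide_right_mono)
      also have "\<dots> = c + fh * \<bar>K\<bar> / x" using elim by (simp add: field_simps)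
      finally show ?case .
    qed
    have inv0: "((\<lambda>x. C / x) \<longlongrightarrow> 0) at_top" for C :: real
      by (rule tendsto_divide_0[OF tendsto_const filterlim_at_top_imp_at_infinity[OF filterlim_ident]])
    have "((\<lambda>x. max \<beta> (fh - fh * K / x)) \<longlongrightarrow> max \<beta> (fh - 0)) at_top"
      by (intro tendsto_max tendsto_const tendsto_diff inv0)
    then show "((\<lambda>x. max \<beta> (fh - fh * K / x)) \<longlongrightarrow> c) at_top" by (simp add: c_def max.commute)
    have "((\<lambda>x. c + fh * \<bar>K\<bar> / x) \<longlongrightarrow> c + 0) at_top"
      by (intro tendsto_add tendsto_const inv0)
    then show "((\<lambda>x. c + fh * \<bar>K\<bar> / x) \<longlongrightarrow> c) at_top" by simp
  qed
  then show ?thesis by (simp add: V_def c_def fh_def \<beta>_def)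
qed

end
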